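(* Fix $\rho<1$. There exist constants $K,c>0$ (depending only on $\rho$) such that the following holds for all sufficiently large integers $t$. Let $n$ be an integer with $Kt/\log t\leq n\leq Kt/\log t+2$ and let $H$ be any $3$-regular graph on $n$ vertices whose transition matrix has all eigenvalues other than $1$ of absolute value at most $\rho$. Let $G_t$ be the graph obtained from the half-line $\mathbb{N}=\{0,1,2,\ldots\}$ (edges between consecutive integers) by adding a copy of $H$ and a single edge joining $0$ to some vertex of $H$ (so that $0$ has degree $2$). Then simple random walk on $G_t$ satisfies $$\mathbb{P}_0(\tau_0=t\mid\tau_0\geq t)\geq\frac{c\log t}{t}.$$
   Context: $\tau_0=\min\{s\geq1:X_s=0\}$ for simple random walk $(X_s)$ on $G_t$ started at $0$. *)

theory Defs
  imports "HOL-Probability.Probability" "Jordan_Normal_Form.Char_Poly"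
begin

definition srw_step :: "('a \<Rightarrow> 'a \<Rightarrow> bool) \<Rightarrow> 'a \<Rightarrow> 'a pmf" where
  "srw_step adj x = pmf_of_set {y. adj x y}"

fun srw_path :: "('a \<Rightarrow> 'a \<Rightarrow> bool) \<Rightarrow> 'a \<Rightarrow> nat \<Rightarrow> 'a list pmf" where
  "srw_path adj x0 0 = return_pmf [x0]"
| "srw_path adj x0 (Suc s) =
     bind_pmf (srw_path adj x0 s) (\<lambda>p. map_pmf (\<lambda>y. p @ [y]) (srw_step adj (last p)))"

definition return_time_eq :: "('a \<Rightarrow> 'a \<Rightarrow> bool) \<Rightarrow> 'a \<Rightarrow> nat \<Rightarrow> real" where
  "return_time_eq adj x0 t = measure_pmf.prob (srw_path adj x0 t)
     {p. p ! t = x0 \<and> (\<forall>s\<in>{1..<t}. p ! s \<noteq> x0)}"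

definition return_time_ge :: "('a \<Rightarrow> 'a \<Rightarrow> bool) \<Rightarrow> 'a \<Rightarrow> nat \<Rightarrow> real" where
  "return_time_ge adj x0 t = measure_pmf.prob (srw_path adj x0 t)
     {p. \<forall>s\<in>{1..<t}. p ! s \<noteq> x0}"

definition three_regular :: "nat \<Rightarrow> (nat \<Rightarrow> nat \<Rightarrow> bool) \<Rightarrow> bool" where
  "three_regular n E \<longleftrightarrow>
     (\<forall>i<n. \<forall>j<n. E i j \<longleftrightarrow> E j i) \<and> (\<forall>i<n. \<not> E i i) \<and>
     (\<forall>i<n. card {j. j < n \<and> E i j} = 3)"

definition trans_mat3 :: "nat \<Rightarrow> (nat \<Rightarrow> nat \<Rightarrow> bool) \<Rightarrow> complex mat" where
  "trans_mat3 n E = mat n n (\<lambda>(i,j). if E i j then 1/3 else 0)"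

(* All eigenvalues other than (one copy of) the trivial eigenvalue 1 have modulus
   at most rho: 1 has algebraic multiplicity at most 1, and every other eigenvalue
   has modulus at most rho. *)
definition nontrivial_eigs_bounded :: "complex mat \<Rightarrow> real \<Rightarrow> bool" where
  "nontrivial_eigs_bounded A \<rho> \<longleftrightarrow>
     order 1 (char_poly A) \<le> 1 \<and> (\<forall>\<mu>. eigenvalue A \<mu> \<and> \<mu> \<noteq> 1 \<longrightarrow> cmod \<mu> \<le> \<rho>)"

(* G_t: half-line (Inl k) plus a copy of H (Inr i, i<n), with one edge Inl 0 -- Inr v *)
definition Gt_adj :: "nat \<Rightarrow> (nat \<Rightarrow> nat \<Rightarrow> bool) \<Rightarrow> nat \<Rightarrow> nat + nat \<Rightarrow> nat + nat \<Rightarrow> bool" where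
  "Gt_adj n E v x y = (case (x, y) of
      (Inl a, Inl b) \<Rightarrow> b = a + 1 \<or> a = b + 1
    | (Inl a, Inr j) \<Rightarrow> a = 0 \<and> j = v
    | (Inr i, Inl b) \<Rightarrow> b = 0 \<and> i = v
    | (Inr i, Inr j) \<Rightarrow> i < n \<and> j < n \<and> E i j)"

end

theory Submission
  imports Defs "Jordan_Normal_Form.Spectral_Radius" "Jordan_Normal_Form.Jordan_Normal_Form_Uniqueness" "HOL-Real_Asymp.Real_Asymp"
begin


lemma integral_bind_pmf_bdd:
  fixes f :: "'b \<Rightarrow> real"
  assumes "\<And>x. \<bar>f x\<bar> \<le> B"
  shows "measure_pmf.expectation (bind_pmf p q) f = measure_pmf.expectation p (\<lambda>x. measure_pmf.expectation (q x) f)"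
  unfolding measure_pmf_bind
  apply (rule integral_bind[where K="count_space UNIV" and B=B and B'=1])
  using assms by (auto simp: measure_pmf_in_subprob_algebra)

lemma E_bdd:
  fixes f :: "'b \<Rightarrow> real"
  assumes "\<And>x. \<bar>f x\<bar> \<le> B"
  shows "\<bar>measure_pmf.expectation M f\<bar> \<le> B"
proof -
  have int: "integrable (measure_pmf M) f"
    by (rule measure_pmf.integrable_const_bound[where B=B], insert assms, auto)
  have "measure_pmf.expectation M f \<le> B"
    by (rule measure_pmf.integral_le_const[OF int], insert assms, auto simp: abs_le_iff)
  moreover have "measure_pmf.expectation M (\<lambda>x. - f x) \<le> B"
    by (rule measure_pmf.integral_le_const, insert int assms, auto simp: abs_le_iff)
  ultimately show ?thesis by (simp add: abs_le_iff)
qed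

lemma E_cong_supp:
  fixes f g :: "'b \<Rightarrow> real"
  assumes "\<And>x. x \<in> set_pmf M \<Longrightarrow> f x = g x"
  shows "measure_pmf.expectation M f = measure_pmf.expectation M g"
  by (rule integral_cong_AE, auto simp: AE_measure_pmf_iff assms)

lemma prob_as_E: "measure_pmf.prob M A = measure_pmf.expectation M (\<lambda>x. if x \<in> A then 1 else 0)"
proof -
  have "(\<lambda>x. if x \<in> A then 1 else 0 :: real) = indicator A" by (auto simp: indicator_def)
  then show ?thesis by simp
qed

definition Top :: "('a \<Rightarrow> 'a \<Rightarrow> bool) \<Rightarrow> 'a \<Rightarrow> ('a \<Rightarrow> real) \<Rightarrow> 'a \<Rightarrow> real" where
  "Top adj x0 g x = measure_pmf.expectation (srw_step adj x) (\<lambda>y. if y = x0 then 0 else g y)"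

definition taboo :: "'a \<Rightarrow> nat \<Rightarrow> 'a list \<Rightarrow> bool" where
  "taboo x0 k p = (\<forall>s\<in>{1..k}. p ! s \<noteq> x0)"

lemma srw_path_len: "p \<in> set_pmf (srw_path adj x0 k) \<Longrightarrow> length p = Suc k"
  by (induction k arbitrary: p, auto)

lemma Top_bdd: assumes "\<And>y. \<bar>g y\<bar> \<le> B" shows "\<bar>Top adj x0 g x\<bar> \<le> B"
  unfolding Top_def by (rule E_bdd, insert assms order_trans[OF _ assms], auto)

lemma taboo_snoc: assumes "length p = Suc k"
  shows "taboo x0 (Suc k) (p @ [y]) = (taboo x0 k p \<and> y \<noteq> x0)"
proof -
  have a: "(p @ [y]) ! s = p ! s" if "s \<le> k" for s using that assms by (simp add: nth_append)
  have b: "(p @ [y]) ! Suc k = y" using assms by (simp add: nth_append)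
  have eq: "{1..Suc k} = insert (Suc k) {1..k}" by auto
  have c: "(\<forall>s\<in>{1..k}. (p @ [y]) ! s \<noteq> x0) = (\<forall>s\<in>{1..k}. p ! s \<noteq> x0)" using a by auto
  show ?thesis unfolding taboo_def eq using c b by auto
qed

lemma path_key:
  assumes "\<And>y. \<bar>g y\<bar> \<le> B"
  shows "measure_pmf.expectation (srw_path adj x0 k) (\<lambda>p. if taboo x0 k p then g (last p) else 0)
     = (Top adj x0 ^^ k) g x0"
  using assms
proof (induction k arbitrary: g)
  case 0
  then show ?case by (simp add: taboo_def)
next
  case (Suc k)
  let ?F = "\<lambda>p. if taboo x0 (Suc k) p then g (last p) else 0"
  have bF: "\<bar>?F p\<bar> \<le> B" for p using Suc(2)[of "last p"] Suc(2)[of x0] by auto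
  have "measure_pmf.expectation (srw_path adj x0 (Suc k)) ?F
     = measure_pmf.expectation (srw_path adj x0 k)
        (\<lambda>p. measure_pmf.expectation (map_pmf (\<lambda>y. p @ [y]) (srw_step adj (last p))) ?F)"
    by (simp only: srw_path.simps, rule integral_bind_pmf_bdd[OF bF])
  also have "\<dots> = measure_pmf.expectation (srw_path adj x0 k)
        (\<lambda>p. if taboo x0 k p then Top adj x0 g (last p) else 0)"
  proof (rule E_cong_supp)
    fix p assume p: "p \<in> set_pmf (srw_path adj x0 k)"
    then have len: "length p = Suc k" by (rule srw_path_len)
    show "measure_pmf.expectation (map_pmf (\<lambda>y. p @ [y]) (srw_step adj (last p))) ?F
        = (if taboo x0 k p then Top adj x0 g (last p) else 0)"
    proof (cases "taboo x0 k p")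
      case True
      have "(\<lambda>y. ?F (p @ [y])) = (\<lambda>y. if y = x0 then 0 else g y)"
        by (rule ext) (simp add: taboo_snoc[OF len] True)
      then show ?thesis using True by (simp only: integral_map_pmf Top_def, simp)
    next
      case False
      have "(\<lambda>y. ?F (p @ [y])) = (\<lambda>y. 0)"
        by (rule ext) (simp add: taboo_snoc[OF len] False)
      then show ?thesis using False by (simp only: integral_map_pmf, simp)
    qed
  qed
  also have "\<dots> = (Top adj x0 ^^ k) (Top adj x0 g) x0"
    by (rule Suc(1), rule Top_bdd, rule Suc(2))
  also have "\<dots> = (Top adj x0 ^^ Suc k) g x0"
    by (simp add: funpow_Suc_right del: funpow.simps)
  finally show ?case .
qed

lemma ge_eq: "return_time_ge adj x0 (Suc k) = (Top adj x0 ^^ k) (\<lambda>_. 1) x0"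
proof -
  let ?A = "{p. \<forall>s\<in>{1..<Suc k}. p ! s \<noteq> x0}"
  let ?F = "\<lambda>p. if p \<in> ?A then 1 else 0 :: real"
  have "return_time_ge adj x0 (Suc k) = measure_pmf.expectation (srw_path adj x0 (Suc k)) ?F"
    unfolding return_time_ge_def by (rule prob_as_E)
  also have "\<dots> = measure_pmf.expectation (srw_path adj x0 k)
        (\<lambda>p. measure_pmf.expectation (map_pmf (\<lambda>y. p @ [y]) (srw_step adj (last p))) ?F)"
    by (simp only: srw_path.simps, rule integral_bind_pmf_bdd[where B=1], simp)
  also have "\<dots> = measure_pmf.expectation (srw_path adj x0 k)
        (\<lambda>p. if taboo x0 k p then (\<lambda>_. 1) (last p) else 0)"
  proof (rule E_cong_supp)
    fix p assume p: "p \<in> set_pmf (srw_path adj x0 k)"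
    then have len: "length p = Suc k" by (rule srw_path_len)
    have "(p @ [y]) \<in> ?A \<longleftrightarrow> taboo x0 k p" for y
      using len unfolding taboo_def by (auto simp: nth_append)
    then have "(\<lambda>y. ?F (p @ [y])) = (\<lambda>y. if taboo x0 k p then 1 else 0)"
      by (intro ext) (simp only:)
    then show "measure_pmf.expectation (map_pmf (\<lambda>y. p @ [y]) (srw_step adj (last p))) ?F
        = (if taboo x0 k p then (\<lambda>_. 1) (last p) else 0)"
      by (simp only: integral_map_pmf, simp)
  qed
  also have "\<dots> = (Top adj x0 ^^ k) (\<lambda>_. 1) x0"
    by (rule path_key[where B=1], simp)
  finally show ?thesis .
qed

lemma eq_eq: "return_time_eq adj x0 (Suc k) =
   (Top adj x0 ^^ k) (\<lambda>x. measure_pmf.prob (srw_step adj x) {x0}) x0"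
proof -
  let ?A = "{p. p ! Suc k = x0 \<and> (\<forall>s\<in>{1..<Suc k}. p ! s \<noteq> x0)}"
  let ?F = "\<lambda>p. if p \<in> ?A then 1 else 0 :: real"
  have "return_time_eq adj x0 (Suc k) = measure_pmf.expectation (srw_path adj x0 (Suc k)) ?F"
    unfolding return_time_eq_def by (rule prob_as_E)
  also have "\<dots> = measure_pmf.expectation (srw_path adj x0 k)
        (\<lambda>p. measure_pmf.expectation (map_pmf (\<lambda>y. p @ [y]) (srw_step adj (last p))) ?F)"
    by (simp only: srw_path.simps, rule integral_bind_pmf_bdd[where B=1], simp)
  also have "\<dots> = measure_pmf.expectation (srw_path adj x0 k)
        (\<lambda>p. if taboo x0 k p then (\<lambda>x. measure_pmf.prob (srw_step adj x) {x0}) (last p) else 0)"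
  proof (rule E_cong_supp)
    fix p assume p: "p \<in> set_pmf (srw_path adj x0 k)"
    then have len: "length p = Suc k" by (rule srw_path_len)
    have e: "(p @ [y]) \<in> ?A \<longleftrightarrow> taboo x0 k p \<and> y = x0" for y
      using len unfolding taboo_def by (auto simp: nth_append)
    have "measure_pmf.expectation (map_pmf (\<lambda>y. p @ [y]) (srw_step adj (last p))) ?F
       = measure_pmf.expectation (srw_step adj (last p)) (\<lambda>y. if taboo x0 k p \<and> y = x0 then 1 else 0)"
      by (simp only: integral_map_pmf e)
    also have "\<dots> = (if taboo x0 k p then measure_pmf.prob (srw_step adj (last p)) {x0} else 0)"
    proof (cases "taboo x0 k p")
      case True then show ?thesis by (simp only: prob_as_E[of _ "{x0}"], simp)
    next
      case False then show ?thesis by simp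
    qed
    finally show "measure_pmf.expectation (map_pmf (\<lambda>y. p @ [y]) (srw_step adj (last p))) ?F
        = (if taboo x0 k p then (\<lambda>x. measure_pmf.prob (srw_step adj x) {x0}) (last p) else 0)"
      by simp
  qed
  also have "\<dots> = (Top adj x0 ^^ k) (\<lambda>x. measure_pmf.prob (srw_step adj x) {x0}) x0"
    by (rule path_key[where B=1], auto)
  finally show ?thesis .
qed


definition Lop :: "(nat \<Rightarrow> real) \<Rightarrow> nat \<Rightarrow> real" where
  "Lop f a = (f (Suc a) + (if 2 \<le> a then f (a - 1) else 0)) / 2"

definition LopL :: "nat \<Rightarrow> (nat \<Rightarrow> real) \<Rightarrow> nat \<Rightarrow> real" where
  "LopL L f a = ((if Suc a < L then f (Suc a) else 0) + (if 2 \<le> a then f (a - 1) else 0)) / 2"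

lemma Lop_pow_bounds: "0 \<le> (Lop ^^ k) (\<lambda>_. 1) a \<and> (Lop ^^ k) (\<lambda>_. 1) a \<le> 1"
proof (induction k arbitrary: a)
  case 0 then show ?case by simp
next
  case (Suc k)
  show ?case using Suc[of "Suc a"] Suc[of "a - 1"] by (auto simp: Lop_def)
qed

lemma Lop_pow_nonneg: assumes "\<And>b. 0 \<le> f b" shows "0 \<le> (Lop ^^ k) f a"
  using assms
proof (induction k arbitrary: a)
  case 0 then show ?case by simp
next
  case (Suc k)
  show ?case using Suc(1)[of "Suc a", OF Suc(2)] Suc(1)[of "a - 1", OF Suc(2)] by (auto simp: Lop_def)
qed

lemma LopL_mono:
  assumes "\<And>b. 1 \<le> b \<Longrightarrow> b < L \<Longrightarrow> f b \<le> g b" "1 \<le> a" "a < L"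
  shows "LopL L f a \<le> LopL L g a"
proof -
  have h1: "(if Suc a < L then f (Suc a) else 0) \<le> (if Suc a < L then g (Suc a) else 0)"
    using assms(1)[of "Suc a"] by auto
  have h2: "(if 2 \<le> a then f (a - 1) else 0) \<le> (if 2 \<le> a then g (a - 1) else 0)"
    using assms(1)[of "a - 1"] assms(3) by auto
  show ?thesis unfolding LopL_def by (rule divide_right_mono, rule add_mono[OF h1 h2], simp)
qed

lemma LopL_pow_mono:
  assumes "\<And>b. 1 \<le> b \<Longrightarrow> b < L \<Longrightarrow> f b \<le> g b" "1 \<le> a" "a < L"
  shows "(LopL L ^^ k) f a \<le> (LopL L ^^ k) g a"
  using assms(2,3)
proof (induction k arbitrary: a)
  case 0 then show ?case using assms(1) by simp
next
  case (Suc k)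
  show ?case using Suc by (simp, intro LopL_mono, auto)
qed

lemma LopL_diff: "LopL L (\<lambda>b. f b - g b) a = LopL L f a - LopL L g a"
  by (simp add: LopL_def field_simps)

lemma LopL_pow_diff:
  "(LopL L ^^ k) (\<lambda>b. f b - g b) = (\<lambda>a. (LopL L ^^ k) f a - (LopL L ^^ k) g a)"
proof (induction k)
  case 0 then show ?case by simp
next
  case (Suc k)
  show ?case by (rule ext, simp only: funpow.simps comp_def Suc LopL_diff)
qed

lemma LopL_pow_nonneg:
  assumes "\<And>b. 1 \<le> b \<Longrightarrow> b < L \<Longrightarrow> 0 \<le> f b" "1 \<le> a" "a < L"
  shows "0 \<le> (LopL L ^^ k) f a"
proof -
  have "(LopL L ^^ k) (\<lambda>_. 0) a \<le> (LopL L ^^ k) f a"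
    by (rule LopL_pow_mono, insert assms, auto)
  moreover have "(LopL L ^^ k) (\<lambda>_. 0) a = 0" for a
    by (induction k arbitrary: a, auto simp: LopL_def)
  ultimately show ?thesis by simp
qed

lemma LopL_lin: "LopL L (\<lambda>b. real b / real L) a = real a / real L - (if Suc a = L then 1/2 else 0)"
  if "1 \<le> a" "a < L" 
proof (cases "Suc a < L")
  case True then show ?thesis using that by (auto simp: LopL_def field_simps of_nat_diff)
next
  case False
  then have L: "L = Suc a" using that by simp
  show ?thesis
  proof (cases "a = 1")
    case True then show ?thesis using L by (simp add: LopL_def)
  next
    case False
    then have a2: "2 \<le> a" using that by simp
    have "LopL L (\<lambda>b. real b / real L) a = (real a - 1) / (real a + 1) / 2"
      using a2 L by (simp add: LopL_def of_nat_diff)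
    also have "\<dots> = real a / (real a + 1) - 1/2" by (simp add: field_simps)
    finally show ?thesis using L by simp
  qed
qed

lemma Lop_vs_LopL:
  assumes "1 \<le> a" "a < L" "\<And>b. f b \<le> 1"
  shows "Lop f a \<le> LopL L f a + (if Suc a = L then 1/2 else 0)"
  using assms(1,2) assms(3)[of L] assms(3)[of "Suc a"] by (auto simp: Lop_def LopL_def)

lemma line_key:
  assumes "1 \<le> a" "a < L"
  shows "(Lop ^^ k) (\<lambda>_. 1) a - real a / real L \<le> (LopL L ^^ k) (\<lambda>_. 1) a"
  using assms
proof (induction k arbitrary: a)
  case 0 then show ?case using \<open>a < L\<close> by simp
next
  case (Suc k)
  let ?v = "(Lop ^^ k) (\<lambda>_. 1)"
  have "(Lop ^^ Suc k) (\<lambda>_. 1) a - real a / real L = Lop ?v a - real a / real L" by simp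
  also have "\<dots> \<le> LopL L ?v a + (if Suc a = L then 1/2 else 0) - real a / real L"
    using Lop_vs_LopL[OF Suc(2,3), of ?v] Lop_pow_bounds[of k] by auto
  also have "\<dots> = LopL L ?v a - LopL L (\<lambda>b. real b / real L) a"
    using LopL_lin[OF Suc(2,3)] by simp
  also have "\<dots> = LopL L (\<lambda>b. ?v b - real b / real L) a"
    by (simp add: LopL_def field_simps)
  also have "\<dots> \<le> LopL L ((LopL L ^^ k) (\<lambda>_. 1)) a"
    by (rule LopL_mono, insert Suc, auto)
  finally show ?case by simp
qed

lemma LopL_quad: "LopL L (\<lambda>b. real b * (real L - real b)) a = real a * (real L - real a) - 1"
  if "1 \<le> a" "a < L"
proof -
  have cs: "(Suc a < L \<and> 2 \<le> a) \<or> (Suc a < L \<and> a = 1) \<or> (Suc a = L \<and> 2 \<le> a) \<or> (Suc a = L \<and> a = 1)"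
    using that by linarith
  then show ?thesis
  proof (elim disjE conjE)
    assume 1: "Suc a < L" "2 \<le> a" then show ?thesis by (simp add: LopL_def of_nat_diff field_simps)
  next
    assume 2: "Suc a < L" "a = 1" then show ?thesis by (simp add: LopL_def of_nat_diff field_simps)
  next
    assume 3: "Suc a = L" "2 \<le> a"
    then have L: "real L = real a + 1" by simp
    from 3 show ?thesis by (simp add: LopL_def of_nat_diff field_simps L)
  next
    assume 4: "Suc a = L" "a = 1" then show ?thesis by (simp add: LopL_def algebra_simps)
  qed
qed

lemma LopL_agree:
  assumes "\<And>b. 1 \<le> b \<Longrightarrow> b < L \<Longrightarrow> f b = g b" "1 \<le> a" "a < L"
  shows "(LopL L ^^ k) f a = (LopL L ^^ k) g a"
  using LopL_pow_mono[of L f g a k] LopL_pow_mono[of L g f a k] assms by force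

lemma LopL_telescope:
  assumes "1 \<le> a" "a < L"
  shows "(\<Sum>k<m. (LopL L ^^ k) (\<lambda>_. 1) a) \<le> real a * (real L - real a)"
proof -
  let ?q = "\<lambda>b. real b * (real L - real b)"
  have step: "(LopL L ^^ k) ?q a - (LopL L ^^ Suc k) ?q a = (LopL L ^^ k) (\<lambda>_. 1) a"
    if "1 \<le> a" "a < L" for k a
  proof -
    have "(LopL L ^^ Suc k) ?q a = (LopL L ^^ k) (LopL L ?q) a" by (simp add: funpow_Suc_right del: funpow.simps)
    also have "\<dots> = (LopL L ^^ k) (\<lambda>b. ?q b - 1) a"
      by (rule LopL_agree, insert LopL_quad that, auto)
    also have "\<dots> = (LopL L ^^ k) ?q a - (LopL L ^^ k) (\<lambda>_. 1) a"
      by (subst LopL_pow_diff, simp)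
    finally show ?thesis by simp
  qed
  have "(\<Sum>k<m. (LopL L ^^ k) (\<lambda>_. 1) a) = ?q a - (LopL L ^^ m) ?q a"
    by (induction m, auto simp: step[OF assms, symmetric])
  also have "\<dots> \<le> ?q a"
    using LopL_pow_nonneg[of L ?q a m] assms by auto
  finally show ?thesis .
qed

lemma LopL_decr:
  assumes "1 \<le> a" "a < L" "j \<le> k"
  shows "(LopL L ^^ k) (\<lambda>_. 1) a \<le> (LopL L ^^ j) (\<lambda>_. 1) a"
proof -
  have "(LopL L ^^ (Suc i)) (\<lambda>_. 1) a \<le> (LopL L ^^ i) (\<lambda>_. 1) a" if "1 \<le> a" "a < L" for i a
  proof -
    have "(LopL L ^^ (Suc i)) (\<lambda>_. 1) a = (LopL L ^^ i) (LopL L (\<lambda>_. 1)) a"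
      by (simp add: funpow_Suc_right del: funpow.simps)
    also have "\<dots> \<le> (LopL L ^^ i) (\<lambda>_. 1) a"
      by (rule LopL_pow_mono, insert that, auto simp: LopL_def)
    finally show ?thesis .
  qed
  note st = this
  from assms(3) show ?thesis
  proof (induction rule: dec_induct)
    case base then show ?case by simp
  next
    case (step i) then show ?case using st[OF assms(1,2), of i] by linarith
  qed
qed

lemma line_bound_L:
  assumes "2 \<le> L" "m > 0"
  shows "(Lop ^^ m) (\<lambda>_. 1) 1 \<le> 1 / real L + (real L - 1) / real m"
proof -
  have a: "1 \<le> (1::nat)" "1 < L" using assms by auto
  have "real m * (LopL L ^^ m) (\<lambda>_. 1) 1 = (\<Sum>k<m. (LopL L ^^ m) (\<lambda>_. 1) 1)" by simp
  also have "\<dots> \<le> (\<Sum>k<m. (LopL L ^^ k) (\<lambda>_. 1) 1)"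
    by (rule sum_mono, rule LopL_decr, insert a, auto)
  also have "\<dots> \<le> real 1 * (real L - real 1)" by (rule LopL_telescope, insert a, auto)
  finally have "(LopL L ^^ m) (\<lambda>_. 1) 1 \<le> (real L - 1) / real m"
    using assms by (simp add: field_simps)
  with line_key[OF a(1) a(2), of m] show ?thesis by simp
qed

lemma line_bound:
  assumes "m \<ge> 2"
  shows "(Lop ^^ m) (\<lambda>_. 1) 1 \<le> 2 / sqrt (real m)"
proof -
  define L where "L = nat \<lceil>sqrt (real m)\<rceil>"
  have s1: "sqrt (real m) > 1" using assms by simp
  have cz: "0 \<le> \<lceil>sqrt (real m)\<rceil>" using ceiling_mono[of 0 "sqrt (real m)"] by simp
  have cL: "real L = real_of_int \<lceil>sqrt (real m)\<rceil>" unfolding L_def using cz by simp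
  have L1: "real L \<ge> sqrt (real m)" unfolding cL by (rule le_of_int_ceiling)
  have L2: "real L - 1 < sqrt (real m)" unfolding cL using ceiling_correct[of "sqrt (real m)"] by linarith
  have L3: "2 \<le> L" using L1 s1 by linarith
  have "(Lop ^^ m) (\<lambda>_. 1) 1 \<le> 1 / real L + (real L - 1) / real m"
    by (rule line_bound_L, insert L3 assms, auto)
  also have "1 / real L \<le> 1 / sqrt (real m)"
    using L1 s1 by (simp add: frac_le)
  also have "(real L - 1) / real m \<le> sqrt (real m) / real m"
    using L2 assms by (simp add: divide_right_mono)
  also have "sqrt (real m) / real m = 1 / sqrt (real m)"
  proof -
    have e: "real m = sqrt (real m) * sqrt (real m)" by simp
    show ?thesis using s1 by (simp add: field_simps)
  qed
  finally show ?thesis by simp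
qed


definition Hop :: "nat \<Rightarrow> (nat \<Rightarrow> nat \<Rightarrow> bool) \<Rightarrow> nat \<Rightarrow> (nat \<Rightarrow> real) \<Rightarrow> nat \<Rightarrow> real" where
  "Hop n E v f i = (\<Sum>j\<in>{j. j < n \<and> E i j}. f j) / (if i = v then 4 else 3)"

lemma Lop_agree:
  assumes "\<And>b. 1 \<le> b \<Longrightarrow> f1 b = f2 b" "1 \<le> a"
  shows "(Lop ^^ k) f1 a = (Lop ^^ k) f2 a"
  using assms(2)
proof (induction k arbitrary: a)
  case 0 then show ?case using assms(1) by simp
next
  case (Suc k) then show ?case by (simp add: Lop_def)
qed

lemma Hop_agree:
  assumes "\<And>j. j < n \<Longrightarrow> f1 j = f2 j" "i < n"
  shows "(Hop n E v ^^ k) f1 i = (Hop n E v ^^ k) f2 i"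
  using assms(2)
proof (induction k arbitrary: i)
  case 0 then show ?case using assms by simp
next
  case (Suc k)
  have "(\<Sum>j\<in>{j. j < n \<and> E i j}. (Hop n E v ^^ k) f1 j) = (\<Sum>j\<in>{j. j < n \<and> E i j}. (Hop n E v ^^ k) f2 j)"
    by (rule sum.cong, auto intro: Suc.IH)
  then show ?case unfolding funpow.simps comp_def Hop_def[of n E v "(Hop n E v ^^ k) f1"] Hop_def[of n E v "(Hop n E v ^^ k) f2"] by simp
qed

locale Gt =
  fixes n :: nat and E :: "nat \<Rightarrow> nat \<Rightarrow> bool" and v :: nat
  assumes reg: "three_regular n E" and v: "v < n"
begin

abbreviation "adj \<equiv> Gt_adj n E v"
abbreviation "T \<equiv> Top adj (Inl 0)"

definition "NH i = {j. j < n \<and> E i j}"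

lemma NH_card: "i < n \<Longrightarrow> card (NH i) = 3" using reg unfolding three_regular_def NH_def by auto
lemma NH_fin: "finite (NH i)" unfolding NH_def by auto

lemma nb_Inl0: "{y. adj (Inl 0) y} = {Inl 1, Inr v}"
proof (rule Set.set_eqI)
  fix y show "y \<in> {y. adj (Inl 0) y} \<longleftrightarrow> y \<in> {Inl 1, Inr v}" by (cases y) (auto simp: Gt_adj_def)
qed

lemma nb_InlS: "{y. adj (Inl (Suc a)) y} = {Inl (Suc (Suc a)), Inl a}"
proof (rule Set.set_eqI)
  fix y show "y \<in> {y. adj (Inl (Suc a)) y} \<longleftrightarrow> y \<in> {Inl (Suc (Suc a)), Inl a}" by (cases y) (auto simp: Gt_adj_def)
qed

lemma nb_Inr: assumes i: "i < n" shows "{y. adj (Inr i) y} = Inr ` NH i \<union> (if i = v then {Inl 0} else {})"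
proof (rule Set.set_eqI)
  fix y show "y \<in> {y. adj (Inr i) y} \<longleftrightarrow> y \<in> Inr ` NH i \<union> (if i = v then {Inl 0} else {})" using i v by (cases y) (auto simp: Gt_adj_def NH_def)
qed

lemma T_Inl0: "T g (Inl 0) = (g (Inl 1) + g (Inr v)) / 2"
  unfolding Top_def srw_step_def nb_Inl0 by (subst integral_pmf_of_set, auto)

lemma T_InlS: "T g (Inl (Suc a)) = Lop (\<lambda>b. g (Inl b)) (Suc a)"
  unfolding Top_def srw_step_def nb_InlS Lop_def
  by (subst integral_pmf_of_set, auto)

lemma T_Inr: assumes i: "i < n" shows "T g (Inr i) = Hop n E v (\<lambda>j. g (Inr j)) i"
proof -
  have inj: "inj Inr" by (auto simp: inj_def)
  have s: "(\<Sum>y\<in>Inr ` NH i. (if y = Inl 0 then 0 else g y)) = (\<Sum>j\<in>NH i. g (Inr j))"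
    by (subst sum.reindex, auto simp: inj_on_def)
  have c: "card (Inr ` NH i :: (nat + nat) set) = 3" using NH_card[OF i] card_image[of Inr "NH i"] inj
    by (auto simp: inj_on_def)
  have ne: "Inr ` NH i \<noteq> ({} :: (nat + nat) set)" using c by auto
  show ?thesis
  proof (cases "i = v")
    case True
    have ni: "(Inl 0 :: nat + nat) \<notin> Inr ` NH i" by auto
    have fi: "finite (Inr ` NH i :: (nat + nat) set)" using NH_fin by simp
    have c4: "card (insert (Inl 0 :: nat + nat) (Inr ` NH i)) = 4" using card_insert_disjoint[OF fi ni] c by simp
    have "T g (Inr i) = measure_pmf.expectation (pmf_of_set (insert (Inl 0) (Inr ` NH i))) (\<lambda>y. if y = Inl 0 then 0 else g y)"
      unfolding Top_def srw_step_def nb_Inr[OF i] using True by simp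
    also have "\<dots> = (\<Sum>y\<in>insert (Inl 0) (Inr ` NH i). (if y = Inl 0 then 0 else g y)) / real (card (insert (Inl 0 :: nat + nat) (Inr ` NH i)))"
      using fi by (intro integral_pmf_of_set) auto
    also have "\<dots> = (\<Sum>j\<in>NH i. g (Inr j)) / 4"
      using ni fi c4 s by (simp add: sum.insert)
    finally show ?thesis using True by (simp add: Hop_def NH_def)
  next
    case False
    have "T g (Inr i) = measure_pmf.expectation (pmf_of_set (Inr ` NH i)) (\<lambda>y. if y = Inl 0 then 0 else g y)"
      unfolding Top_def srw_step_def nb_Inr[OF i] using False by simp
    also have "\<dots> = (\<Sum>y\<in>Inr ` NH i. (if y = Inl 0 then 0 else g y)) / real (card (Inr ` NH i :: (nat + nat) set))"
      using NH_fin ne by (intro integral_pmf_of_set) auto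
    also have "\<dots> = (\<Sum>j\<in>NH i. g (Inr j)) / 3" using c s by simp
    finally show ?thesis using False by (simp add: Hop_def NH_def)
  qed
qed

lemma T_line: "1 \<le> a \<Longrightarrow> (T ^^ k) g (Inl a) = (Lop ^^ k) (\<lambda>b. g (Inl b)) a"
proof (induction k arbitrary: g a)
  case 0 then show ?case by simp
next
  case (Suc k)
  have "(T ^^ Suc k) g (Inl a) = (T ^^ k) (T g) (Inl a)" by (simp add: funpow_Suc_right del: funpow.simps)
  also have "\<dots> = (Lop ^^ k) (\<lambda>b. T g (Inl b)) a" by (rule Suc.IH, rule Suc.prems)
  also have "\<dots> = (Lop ^^ k) (Lop (\<lambda>b. g (Inl b))) a"
  proof (rule Lop_agree[OF _ Suc.prems])
    fix b :: nat assume "1 \<le> b"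
    then obtain b' where "b = Suc b'" by (cases b, auto)
    then show "T g (Inl b) = Lop (\<lambda>b. g (Inl b)) b" by (simp add: T_InlS)
  qed
  also have "\<dots> = (Lop ^^ Suc k) (\<lambda>b. g (Inl b)) a" by (simp add: funpow_Suc_right del: funpow.simps)
  finally show ?case .
qed

lemma T_H: "i < n \<Longrightarrow> (T ^^ k) g (Inr i) = (Hop n E v ^^ k) (\<lambda>j. g (Inr j)) i"
proof (induction k arbitrary: g i)
  case 0 then show ?case by simp
next
  case (Suc k)
  have "(T ^^ Suc k) g (Inr i) = (T ^^ k) (T g) (Inr i)" by (simp add: funpow_Suc_right del: funpow.simps)
  also have "\<dots> = (Hop n E v ^^ k) (\<lambda>j. T g (Inr j)) i" by (rule Suc.IH, rule Suc.prems)
  also have "\<dots> = (Hop n E v ^^ k) (Hop n E v (\<lambda>j. g (Inr j))) i"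
    by (rule Hop_agree, simp add: T_Inr, rule Suc.prems)
  also have "\<dots> = (Hop n E v ^^ Suc k) (\<lambda>j. g (Inr j)) i" by (simp add: funpow_Suc_right del: funpow.simps)
  finally show ?case .
qed

lemma ge_formula: "return_time_ge adj (Inl 0) (Suc (Suc m)) =
   ((Lop ^^ m) (\<lambda>_. 1) 1 + (Hop n E v ^^ m) (\<lambda>_. 1) v) / 2"
proof -
  have "return_time_ge adj (Inl 0) (Suc (Suc m)) = T ((T ^^ m) (\<lambda>_. 1)) (Inl 0)"
    by (simp add: ge_eq)
  also have "\<dots> = ((T ^^ m) (\<lambda>_. 1) (Inl 1) + (T ^^ m) (\<lambda>_. 1) (Inr v)) / 2" by (rule T_Inl0)
  also have "\<dots> = ((Lop ^^ m) (\<lambda>_. 1) 1 + (Hop n E v ^^ m) (\<lambda>_. 1) v) / 2"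
    using T_line[of 1 m "\<lambda>_. 1"] T_H[OF v, of m "\<lambda>_. 1"] by simp
  finally show ?thesis .
qed

lemma h_Inr: assumes j: "j < n" shows "measure_pmf.prob (srw_step adj (Inr j)) {Inl 0} = (if j = v then 1/4 else 0)"
proof -
  have inj: "inj Inr" by (auto simp: inj_def)
  have c: "card (Inr ` NH j :: (nat + nat) set) = 3" using NH_card[OF j] card_image[of Inr "NH j"] inj
    by (auto simp: inj_on_def)
  have ni: "(Inl 0 :: nat + nat) \<notin> Inr ` NH j" by auto
  have ne: "Inr ` NH j \<noteq> ({} :: (nat + nat) set)" using c by auto
  show ?thesis
  proof (cases "j = v")
    case True
    have fi: "finite (Inr ` NH j :: (nat + nat) set)" using NH_fin by simp
    have c4: "card (insert (Inl 0 :: nat + nat) (Inr ` NH j)) = 4" using card_insert_disjoint[OF fi ni] c by simp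
    have i: "insert (Inl 0) (Inr ` NH j) \<inter> {Inl 0} = {Inl 0 :: nat + nat}" by auto
    show ?thesis unfolding srw_step_def nb_Inr[OF j] using True c4 NH_fin
      by (subst measure_pmf_of_set) (auto simp: i)
  next
    case False
    have i: "Inr ` NH j \<inter> {Inl 0 :: nat + nat} = {}" by auto
    show ?thesis unfolding srw_step_def nb_Inr[OF j] using False ne NH_fin
      by (subst measure_pmf_of_set) (auto simp: i)
  qed
qed

lemma h_nonneg: "0 \<le> measure_pmf.prob (srw_step adj x) {Inl 0}" by simp

lemma eq_formula: "return_time_eq adj (Inl 0) (Suc (Suc m)) \<ge>
   (Hop n E v ^^ m) (\<lambda>j. if j = v then 1/4 else 0) v / 2"
proof -
  let ?h = "\<lambda>x. measure_pmf.prob (srw_step adj x) {Inl 0}"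
  have "return_time_eq adj (Inl 0) (Suc (Suc m)) = T ((T ^^ m) ?h) (Inl 0)"
    by (simp add: eq_eq)
  also have "\<dots> = ((T ^^ m) ?h (Inl 1) + (T ^^ m) ?h (Inr v)) / 2" by (rule T_Inl0)
  also have "\<dots> = ((Lop ^^ m) (\<lambda>b. ?h (Inl b)) 1 + (Hop n E v ^^ m) (\<lambda>j. ?h (Inr j)) v) / 2"
    using T_line[of 1 m ?h] T_H[OF v, of m ?h] by simp
  also have "(Hop n E v ^^ m) (\<lambda>j. ?h (Inr j)) v = (Hop n E v ^^ m) (\<lambda>j. if j = v then 1/4 else 0) v"
    by (rule Hop_agree, rule h_Inr, simp, rule v)
  finally show ?thesis using Lop_pow_nonneg[of "\<lambda>b. ?h (Inl b)" m 1] by simp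
qed

end


definition Rop :: "nat \<Rightarrow> (nat \<Rightarrow> nat \<Rightarrow> bool) \<Rightarrow> (nat \<Rightarrow> real) \<Rightarrow> nat \<Rightarrow> real" where
  "Rop n E f i = (\<Sum>j\<in>{j. j < n \<and> E i j}. f j) / 3"

definition Pk :: "nat \<Rightarrow> (nat \<Rightarrow> nat \<Rightarrow> bool) \<Rightarrow> nat \<Rightarrow> nat \<Rightarrow> nat \<Rightarrow> real" where
  "Pk n E k i j = (Rop n E ^^ k) (\<lambda>l. if l = j then 1 else 0) i"

definition HopY :: "nat \<Rightarrow> (nat \<Rightarrow> nat \<Rightarrow> bool) \<Rightarrow> nat \<Rightarrow> real \<Rightarrow> (nat \<Rightarrow> real) \<Rightarrow> nat \<Rightarrow> real" where
  "HopY n E v y f i = (if i = v then y else 1) * Rop n E f i"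

lemma Hop_eq: "Hop n E v = HopY n E v (3/4)"
  by (intro ext, simp add: Hop_def HopY_def Rop_def)

lemma Rop_eq: "Rop n E = HopY n E v 1"
  by (intro ext, simp add: HopY_def)

lemma Rop_mono: "(\<And>j. j < n \<Longrightarrow> f j \<le> g j) \<Longrightarrow> Rop n E f i \<le> Rop n E g i"
  unfolding Rop_def by (intro divide_right_mono sum_mono, auto)

lemma Rop_lin: "Rop n E (\<lambda>j. a * f j + b * g j) i = a * Rop n E f i + b * Rop n E g i"
  unfolding Rop_def by (simp add: sum.distrib sum_distrib_left field_simps)

lemma Rop_sum: "finite A \<Longrightarrow> Rop n E (\<lambda>j. \<Sum>N\<in>A. f N j) i = (\<Sum>N\<in>A. Rop n E (f N) i)"
  unfolding Rop_def by (simp add: sum.swap[of _ A] sum_divide_distrib)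

lemma HopY_mono: "0 \<le> y \<Longrightarrow> (\<And>j. j < n \<Longrightarrow> f j \<le> g j) \<Longrightarrow> HopY n E v y f i \<le> HopY n E v y g i"
  unfolding HopY_def by (intro mult_left_mono Rop_mono, auto)

lemma HopY_pow_mono:
  assumes "0 \<le> y" "\<And>j. j < n \<Longrightarrow> f j \<le> g j" "i < n"
  shows "(HopY n E v y ^^ k) f i \<le> (HopY n E v y ^^ k) g i"
  using assms(3)
proof (induction k arbitrary: i)
  case 0 then show ?case using assms(2) by simp
next
  case (Suc k) then show ?case by (simp only: funpow.simps comp_def, intro HopY_mono[OF assms(1)] Suc.IH)
qed

lemma HopY_pow_lin_fun:
  "(HopY n E v y ^^ k) (\<lambda>j. a * f j + b * g j) = (\<lambda>i. a * (HopY n E v y ^^ k) f i + b * (HopY n E v y ^^ k) g i)"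
proof (induction k)
  case 0 then show ?case by simp
next
  case (Suc k)
  show ?case
  proof
    fix i
    have "(HopY n E v y ^^ Suc k) (\<lambda>j. a * f j + b * g j) i = HopY n E v y ((HopY n E v y ^^ k) (\<lambda>j. a * f j + b * g j)) i" by simp
    also have "\<dots> = HopY n E v y (\<lambda>j. a * (HopY n E v y ^^ k) f j + b * (HopY n E v y ^^ k) g j) i"
      by (simp only: Suc)
    also have "\<dots> = a * HopY n E v y ((HopY n E v y ^^ k) f) i + b * HopY n E v y ((HopY n E v y ^^ k) g) i"
      unfolding HopY_def Rop_lin by (simp add: algebra_simps)
    finally show "(HopY n E v y ^^ Suc k) (\<lambda>j. a * f j + b * g j) i = a * (HopY n E v y ^^ Suc k) f i + b * (HopY n E v y ^^ Suc k) g i" by simp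
  qed
qed

lemma HopY_pow_lin:
  "(HopY n E v y ^^ k) (\<lambda>j. a * f j + b * g j) i = a * (HopY n E v y ^^ k) f i + b * (HopY n E v y ^^ k) g i"
  by (simp add: HopY_pow_lin_fun)

lemma HopY_pow_scale: "(HopY n E v y ^^ k) (\<lambda>j. a * f j) i = a * (HopY n E v y ^^ k) f i"
  using HopY_pow_lin[where a=a and b=0 and g=f and f=f] by simp

lemma HopY_pow_nonneg: "0 \<le> y \<Longrightarrow> (\<And>j. j < n \<Longrightarrow> 0 \<le> f j) \<Longrightarrow> i < n \<Longrightarrow> 0 \<le> (HopY n E v y ^^ k) f i"
  using HopY_pow_mono[where f="\<lambda>_. 0" and g=f] HopY_pow_scale[where a=0 and f=f] by simp

locale Hloc =
  fixes n :: nat and E :: "nat \<Rightarrow> nat \<Rightarrow> bool" and v :: nat and r :: real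
  assumes reg: "three_regular n E" and v: "v < n" and r0: "0 < r" and r1: "r < 1" and n2: "2 \<le> n"
  and spec: "\<And>k i j. i < n \<Longrightarrow> j < n \<Longrightarrow> \<bar>Pk n E k i j - 1 / real n\<bar> \<le> r ^ k"
begin

abbreviation "R \<equiv> Rop n E"
abbreviation "P \<equiv> Pk n E"
abbreviation "Q \<equiv> HopY n E v (3/4)"
definition "G = 1 / (1 - r)"

lemma G_pos: "G > 0" using r1 by (simp add: G_def)

definition "NH i = {j. j < n \<and> E i j}"
lemma NH_card: "i < n \<Longrightarrow> card (NH i) = 3" using reg unfolding three_regular_def NH_def by auto
lemma NH_fin: "finite (NH i)" unfolding NH_def by auto
lemma R_def': "R f i = (\<Sum>j\<in>NH i. f j) / 3" by (simp add: Rop_def NH_def)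

lemma R_const: "i < n \<Longrightarrow> R (\<lambda>_. c) i = c" unfolding R_def' using NH_card by simp

lemma sym: "i < n \<Longrightarrow> j < n \<Longrightarrow> E i j = E j i" using reg unfolding three_regular_def by auto

lemma R_colsum: "(\<Sum>i<n. R f i) = (\<Sum>j<n. f j)"
proof -
  have nh: "NH i = {j \<in> {..<n}. E i j}" for i by (auto simp: NH_def)
  have "(\<Sum>i<n. R f i) = (\<Sum>i<n. \<Sum>j<n. (if E i j then f j else 0)) / 3"
    unfolding R_def' sum_divide_distrib nh sum.inter_filter[OF finite_lessThan] by simp
  also have "\<dots> = (\<Sum>j<n. \<Sum>i<n. (if E i j then f j else 0)) / 3" by (subst sum.swap, simp)
  also have "\<dots> = (\<Sum>j<n. f j * card {i. i < n \<and> E j i}) / 3"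
  proof -
    have "(\<Sum>i<n. (if E i j then f j else 0)) = f j * card {i. i < n \<and> E j i}" if "j < n" for j
    proof -
      have e: "{i \<in> {..<n}. E i j} = {i. i < n \<and> E j i}" using sym that by auto
      have "(\<Sum>i<n. (if E i j then f j else 0)) = (\<Sum>i\<in>{i \<in> {..<n}. E i j}. f j)" unfolding sum.inter_filter[OF finite_lessThan] by simp
      then show ?thesis unfolding e by simp
    qed
    then show ?thesis by (intro arg_cong[where f="\<lambda>x. x / 3"] sum.cong, auto)
  qed
  also have "\<dots> = (\<Sum>j<n. f j)"
    using reg unfolding three_regular_def by (simp add: sum_divide_distrib)
  finally show ?thesis .
qed

lemma P_Suc: "P (Suc k) i j = R (\<lambda>l. P k l j) i"
  unfolding Pk_def by simp

lemma P_0: "P 0 i j = (if i = j then 1 else 0)" unfolding Pk_def by simp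

lemma P_colsum: "j < n \<Longrightarrow> (\<Sum>i<n. P k i j) = 1"
proof (induction k)
  case 0 then show ?case by (simp add: P_0)
next
  case (Suc k) then show ?case by (simp add: P_Suc R_colsum)
qed

lemma P_nonneg: "0 \<le> P k i j"
proof (induction k arbitrary: i)
  case 0 then show ?case by (simp add: P_0)
next
  case (Suc k) then show ?case unfolding P_Suc R_def' by (intro divide_nonneg_pos sum_nonneg, auto)
qed

lemma P_upper: "i < n \<Longrightarrow> j < n \<Longrightarrow> P k i j \<le> 1 / real n + r ^ k"
  using spec[of i j k] by linarith

lemma P_lower: "i < n \<Longrightarrow> j < n \<Longrightarrow> P k i j \<ge> 1 / real n - r ^ k"
  using spec[of i j k] by linarith

definition "a k i = P k i v - 1 / real n"
definition "g i = (\<Sum>k. a k i)"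

lemma a_bnd: "i < n \<Longrightarrow> \<bar>a k i\<bar> \<le> r ^ k" unfolding a_def using spec v by auto

lemma a_summable: "i < n \<Longrightarrow> summable (\<lambda>k. a k i)"
  by (rule summable_comparison_test[where g="\<lambda>k. r ^ k"], insert a_bnd r0 r1, auto intro!: exI[of _ 0] summable_geometric)

lemma g_bnd: assumes "i < n" shows "\<bar>g i\<bar> \<le> G"
proof -
  have s: "summable (\<lambda>k. r ^ k)" using r0 r1 by (intro summable_geometric, simp)
  have "\<bar>g i\<bar> \<le> (\<Sum>k. \<bar>a k i\<bar>)" unfolding g_def
    by (rule summable_rabs, rule summable_comparison_test[OF _ s], insert a_bnd[OF assms], auto)
  also have "\<dots> \<le> (\<Sum>k. r ^ k)"
    by (rule suminf_le, insert a_bnd[OF assms] s, auto intro: summable_comparison_test[OF _ s])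
  also have "\<dots> = G" unfolding G_def using r0 r1 by (simp add: suminf_geometric)
  finally show ?thesis .
qed

lemma R_g: assumes i: "i < n" shows "R g i = g i - ((if i = v then 1 else 0) - 1 / real n)"
proof -
  have "R g i = (\<Sum>j\<in>NH i. \<Sum>k. a k j) / 3" unfolding R_def' g_def by simp
  also have "\<dots> = (\<Sum>k. \<Sum>j\<in>NH i. a k j) / 3"
    by (subst suminf_sum, insert a_summable, auto simp: NH_def)
  also have "\<dots> = (\<Sum>k. (\<Sum>j\<in>NH i. a k j) / 3)"
    by (rule suminf_divide[symmetric], rule summable_sum, insert a_summable, auto simp: NH_def)
  also have "\<dots> = (\<Sum>k. a (Suc k) i)"
  proof -
    have "(\<Sum>j\<in>NH i. a k j) / 3 = a (Suc k) i" for k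
    proof -
      have "(\<Sum>j\<in>NH i. a k j) / 3 = R (\<lambda>j. P k j v) i - R (\<lambda>_. 1 / real n) i"
        unfolding a_def R_def' by (simp add: sum_subtractf diff_divide_distrib)
      then show ?thesis using R_const[OF i] by (simp add: a_def P_Suc)
    qed
    then show ?thesis by simp
  qed
  also have "\<dots> = g i - a 0 i" unfolding g_def by (rule suminf_split_head, rule a_summable[OF i])
  finally show ?thesis by (simp add: a_def P_0)
qed

lemma g_sum: "(\<Sum>i<n. g i) = 0"
proof -
  have "(\<Sum>i<n. g i) = (\<Sum>k. \<Sum>i<n. a k i)" unfolding g_def
    by (subst suminf_sum, insert a_summable, auto)
  also have "\<dots> = 0"
  proof -
    have "(\<Sum>i<n. a k i) = 0" for k unfolding a_def using P_colsum[OF v] n2 by (simp add: sum_subtractf)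
    then show ?thesis by simp
  qed
  finally show ?thesis .
qed

lemma g_max: assumes i: "i < n" shows "g i \<le> g v"
proof (rule ccontr)
  assume "\<not> g i \<le> g v"
  define M where "M = Max (g ` {..<n})"
  have fin: "finite (g ` {..<n})" by simp
  have ne: "g ` {..<n} \<noteq> {}" using i by auto
  obtain i0 where i0: "i0 < n" "g i0 = M" using Max_in[OF fin ne] unfolding M_def by auto
  have le: "g j \<le> M" if "j < n" for j unfolding M_def using that by (intro Max_ge, auto)
  have "g v < M" using le[OF i] \<open>\<not> g i \<le> g v\<close> by simp
  then have "i0 \<noteq> v" using i0 by auto
  then have "R g i0 = g i0 + 1 / real n" using R_g[OF i0(1)] by simp
  moreover have "R g i0 \<le> R (\<lambda>_. M) i0" by (rule Rop_mono, rule le)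
  ultimately have "M + 1 / real n \<le> M" using R_const[OF i0(1)] i0 by simp
  then show False using n2 by simp
qed

lemma g_v_nonneg: "0 \<le> g v"
proof -
  have "0 = (\<Sum>i<n. g i)" using g_sum by simp
  also have "\<dots> \<le> (\<Sum>i<n. g v)" by (rule sum_mono, rule g_max, simp)
  finally show ?thesis using n2 by (simp add: zero_le_mult_iff)
qed

definition "alpha = 1 / (1 + g v)"
definition "phi i = 1 - alpha * g i"

lemma alpha_pos: "0 < alpha" "alpha \<le> 1" using g_v_nonneg unfolding alpha_def by auto
lemma alpha_lower: "alpha \<ge> 1 / (1 + G)"
  unfolding alpha_def using g_bnd[OF v] g_v_nonneg G_pos by (intro divide_left_mono, auto)

lemma phi_v: "phi v = alpha" unfolding phi_def alpha_def using g_v_nonneg by (simp add: field_simps)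
lemma phi_ge: "i < n \<Longrightarrow> phi i \<ge> alpha"
  using g_max[of i] alpha_pos phi_v unfolding phi_def by (metis diff_left_mono mult_left_mono less_imp_le)
lemma phi_le: "i < n \<Longrightarrow> phi i \<le> 1 + G"
proof -
  assume i: "i < n"
  have "- (alpha * g i) \<le> alpha * G" using g_bnd[OF i] alpha_pos
    by (metis abs_le_iff abs_minus_cancel minus_mult_right mult_left_mono less_imp_le)
  also have "\<dots> \<le> G" using alpha_pos G_pos by (simp add: mult_le_cancel_right1)
  finally show ?thesis unfolding phi_def by simp
qed

lemma R_phi: assumes i: "i < n" shows "R phi i = phi i + alpha * (if i = v then 1 else 0) - alpha / real n"
proof -
  have "R phi i = R (\<lambda>j. 1 * (\<lambda>_. 1) j + (- alpha) * g j) i" unfolding phi_def by simp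
  also have "\<dots> = 1 - alpha * R g i" by (subst Rop_lin, simp add: R_const[OF i])
  finally show ?thesis using R_g[OF i] unfolding phi_def by (simp add: algebra_simps)
qed

lemma Q_phi: assumes i: "i < n" shows "Q phi i \<ge> (1 - 1 / real n) * phi i"
proof (cases "i = v")
  case True
  have "Q phi i = 3/4 * (alpha + alpha - alpha / real n)" unfolding HopY_def using R_phi[OF i] True phi_v by simp
  moreover have "3/4 * (alpha + alpha - alpha / real n) \<ge> (1 - 1 / real n) * alpha"
    using alpha_pos n2 by (simp add: field_simps)
  ultimately show ?thesis using True phi_v by simp
next
  case False
  have "Q phi i = phi i - alpha / real n" unfolding HopY_def using R_phi[OF i] False by simp
  moreover have "alpha / real n \<le> phi i / real n" using phi_ge[OF i] n2 by (simp add: divide_right_mono)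
  ultimately show ?thesis by (simp add: algebra_simps)
qed

lemma Q_pow_phi: "i < n \<Longrightarrow> (Q ^^ m) phi i \<ge> (1 - 1 / real n) ^ m * phi i"
proof (induction m arbitrary: i)
  case 0 then show ?case by simp
next
  case (Suc m)
  have c: "0 \<le> 1 - 1 / real n" using n2 by simp
  have "(1 - 1 / real n) ^ Suc m * phi i = (1 - 1 / real n) * ((1 - 1 / real n) ^ m * phi i)" by simp
  also have "\<dots> \<le> (1 - 1 / real n) * (Q ^^ m) phi i"
    using Suc.IH[OF Suc.prems] c by (intro mult_left_mono, auto)
  also have "\<dots> = (Q ^^ m) (\<lambda>j. (1 - 1 / real n) * phi j) i"
    by (rule HopY_pow_scale[symmetric])
  also have "\<dots> \<le> (Q ^^ m) (Q phi) i"
    by (rule HopY_pow_mono, insert Q_phi Suc.prems, auto)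
  also have "\<dots> = (Q ^^ Suc m) phi i" by (simp add: funpow_Suc_right del: funpow.simps)
  finally show ?case .
qed

lemma S_lower: "(Q ^^ m) (\<lambda>_. 1) v \<ge> (1 - 1 / real n) ^ m / (1 + G) ^ 2"
proof -
  have "(Q ^^ m) phi v \<le> (Q ^^ m) (\<lambda>_. (1 + G) * 1) v"
    by (rule HopY_pow_mono, insert phi_le v, auto)
  also have "\<dots> = (1 + G) * (Q ^^ m) (\<lambda>_. 1) v" by (rule HopY_pow_scale)
  finally have b: "(Q ^^ m) phi v \<le> (1 + G) * (Q ^^ m) (\<lambda>_. 1) v" .
  have "(1 - 1 / real n) ^ m / (1 + G) ^ 2 = ((1 - 1 / real n) ^ m * (1 / (1 + G))) / (1 + G)"
    by (simp add: power2_eq_square)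
  also have "\<dots> \<le> ((1 - 1 / real n) ^ m * phi v) / (1 + G)"
    using alpha_lower phi_v n2 G_pos by (intro divide_right_mono mult_left_mono, auto)
  also have "\<dots> \<le> (Q ^^ m) phi v / (1 + G)"
    using Q_pow_phi[OF v] G_pos by (intro divide_right_mono, auto)
  also have "\<dots> \<le> (Q ^^ m) (\<lambda>_. 1) v" using b G_pos by (simp add: divide_le_eq mult.commute)
  finally show ?thesis .
qed

lemma Q_pow_le1: "i < n \<Longrightarrow> (Q ^^ m) (\<lambda>_. 1) i \<le> 1"
proof (induction m arbitrary: i)
  case 0 then show ?case by simp
next
  case (Suc m)
  have "(Q ^^ Suc m) (\<lambda>_. 1) i = Q ((Q ^^ m) (\<lambda>_. 1)) i" by simp
  also have "\<dots> \<le> Q (\<lambda>_. 1) i" by (rule HopY_mono, insert Suc.IH, auto)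
  also have "\<dots> \<le> 1" unfolding HopY_def using R_const[OF Suc.prems] by simp
  finally show ?case .
qed

end


fun Cnt :: "nat \<Rightarrow> (nat \<Rightarrow> nat \<Rightarrow> bool) \<Rightarrow> nat \<Rightarrow> nat \<Rightarrow> nat \<Rightarrow> nat \<Rightarrow> real" where
  "Cnt n E v 0 i N = (if i = v \<and> N = 0 then 1 else 0)"
| "Cnt n E v (Suc s) i N = (if i = v then (if N = 0 then 0 else Rop n E (\<lambda>j. Cnt n E v s j (N - 1)) i)
      else Rop n E (\<lambda>j. Cnt n E v s j N) i)"

lemma HopY_v: "HopY n E v y f v = y * Rop n E f v" by (simp add: HopY_def)
lemma HopY_nv: "i \<noteq> v \<Longrightarrow> HopY n E v y f i = Rop n E f i" by (simp add: HopY_def)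

lemma Rop_sum_scale: "finite A \<Longrightarrow> Rop n E (\<lambda>j. \<Sum>N\<in>A. c N * f N j) i = (\<Sum>N\<in>A. c N * Rop n E (f N) i)"
  by (subst Rop_sum, simp, rule sum.cong, auto simp: Rop_lin[where b=0, simplified])

lemma Cnt_nonneg: "0 \<le> Cnt n E v s i N"
proof (induction s arbitrary: i N)
  case 0 then show ?case by simp
next
  case (Suc s)
  have "0 \<le> Rop n E (\<lambda>j. Cnt n E v s j N') i" for N' i
    unfolding Rop_def by (intro divide_nonneg_pos sum_nonneg, insert Suc, auto)
  then show ?case by simp
qed

context Hloc begin

abbreviation "Cn \<equiv> Cnt n E v"
abbreviation "dv \<equiv> (\<lambda>j::nat. if j = v then 1 else (0::real))"

lemma C1: "s \<le> M \<Longrightarrow> (\<Sum>N\<le>M. Cn s i N * y ^ N) = (HopY n E v y ^^ s) dv i"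
proof (induction s arbitrary: i M)
  case 0
  show ?case
  proof (cases "i = v")
    case True
    have "(\<Sum>N\<le>M. Cn 0 i N * y ^ N) = (\<Sum>N\<le>M. (if N = 0 then 1 else 0))" using True by (intro sum.cong, auto)
    also have "\<dots> = 1" by (simp add: sum.delta)
    finally show ?thesis using True by simp
  next
    case False then show ?thesis by simp
  qed
next
  case (Suc s)
  have IH: "(\<lambda>j. \<Sum>N\<le>M'. Cn s j N * y ^ N) = (HopY n E v y ^^ s) dv" if "s \<le> M'" for M'
    using Suc.IH that by auto
  show ?case
  proof (cases "i = v")
    case True
    obtain M' where M: "M = Suc M'" "s \<le> M'" using Suc.prems by (cases M, auto)
    have "(\<Sum>N\<le>M. Cn (Suc s) i N * y ^ N) = (\<Sum>N\<le>M'. Cn (Suc s) i (Suc N) * y ^ (Suc N))"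
      unfolding M(1) by (subst sum.atMost_Suc_shift, simp add: True)
    also have "\<dots> = (\<Sum>N\<le>M'. (y * y ^ N) * R (\<lambda>j. Cn s j N) i)" using True by (intro sum.cong, auto)
    also have "\<dots> = y * R (\<lambda>j. \<Sum>N\<le>M'. y ^ N * Cn s j N) i"
      by (subst Rop_sum_scale, simp, simp add: sum_distrib_left mult.assoc)
    also have "(\<lambda>j. \<Sum>N\<le>M'. y ^ N * Cn s j N) = (HopY n E v y ^^ s) dv"
      using IH[OF M(2)] by (simp add: mult.commute)
    finally show ?thesis using True by (simp add: HopY_v)
  next
    case False
    have "(\<Sum>N\<le>M. Cn (Suc s) i N * y ^ N) = (\<Sum>N\<le>M. y ^ N * R (\<lambda>j. Cn s j N) i)"
      using False by (intro sum.cong, auto)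
    also have "\<dots> = R (\<lambda>j. \<Sum>N\<le>M. y ^ N * Cn s j N) i"
      by (subst Rop_sum_scale, auto)
    also have "(\<lambda>j. \<Sum>N\<le>M. y ^ N * Cn s j N) = (HopY n E v y ^^ s) dv"
      using IH[of M] Suc.prems by (simp add: mult.commute)
    finally show ?thesis using False by (simp add: HopY_nv)
  qed
qed

lemma C2: "s \<le> M \<Longrightarrow> (\<Sum>N\<le>M. Cn s i N) = P s i v"
  using C1[of s M i 1] unfolding Pk_def Rop_eq[of n E v, symmetric] by simp

definition "Dk s i = (\<Sum>k<s. P k i v * P (s - k) v v)"

lemma Dk_Suc: "Dk (Suc s) i = R (Dk s) i + (if i = v then P (Suc s) v v else 0)"
proof -
  have "Dk (Suc s) i = P 0 i v * P (Suc s) v v + (\<Sum>k<s. P (Suc k) i v * P (s - k) v v)"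
    unfolding Dk_def by (subst sum.lessThan_Suc_shift, simp)
  also have "(\<Sum>k<s. P (Suc k) i v * P (s - k) v v) = (\<Sum>k<s. P (s - k) v v * R (\<lambda>l. P k l v) i)"
    by (intro sum.cong, auto simp: P_Suc)
  also have "\<dots> = R (\<lambda>l. \<Sum>k<s. P (s - k) v v * P k l v) i"
    by (subst Rop_sum_scale, simp, simp)
  also have "(\<lambda>l. \<Sum>k<s. P (s - k) v v * P k l v) = Dk s" unfolding Dk_def by (simp add: mult.commute)
  finally show ?thesis by (simp add: P_0)
qed

lemma C3: "s \<le> M \<Longrightarrow> (\<Sum>N\<le>M. real N * Cn s i N) = Dk s i"
proof (induction s arbitrary: i M)
  case 0 then show ?case by (simp add: Dk_def)
next
  case (Suc s)
  have IH: "(\<lambda>j. \<Sum>N\<le>M'. real N * Cn s j N) = Dk s" if "s \<le> M'" for M'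
    using Suc.IH that by auto
  show ?case
  proof (cases "i = v")
    case True
    obtain M' where M: "M = Suc M'" "s \<le> M'" using Suc.prems by (cases M, auto)
    have "(\<Sum>N\<le>M. real N * Cn (Suc s) i N) = (\<Sum>N\<le>M'. real (Suc N) * Cn (Suc s) i (Suc N))"
      unfolding M(1) by (subst sum.atMost_Suc_shift, simp)
    also have "\<dots> = (\<Sum>N\<le>M'. real N * R (\<lambda>j. Cn s j N) i + 1 * R (\<lambda>j. Cn s j N) i)"
      using True by (intro sum.cong refl) (simp add: distrib_right)
    also have "\<dots> = (\<Sum>N\<le>M'. real N * R (\<lambda>j. Cn s j N) i) + (\<Sum>N\<le>M'. 1 * R (\<lambda>j. Cn s j N) i)"
      by (rule sum.distrib)
    also have "(\<Sum>N\<le>M'. real N * R (\<lambda>j. Cn s j N) i) = R (\<lambda>j. \<Sum>N\<le>M'. real N * Cn s j N) i"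
      by (subst Rop_sum_scale, auto)
    also have "(\<Sum>N\<le>M'. 1 * R (\<lambda>j. Cn s j N) i) = R (\<lambda>j. \<Sum>N\<le>M'. 1 * Cn s j N) i"
      by (subst Rop_sum_scale, auto)
    also have "(\<lambda>j. \<Sum>N\<le>M'. 1 * Cn s j N) = (\<lambda>j. P s j v)" using C2[OF M(2)] by simp
    also have "(\<lambda>j. \<Sum>N\<le>M'. real N * Cn s j N) = Dk s" by (rule IH[OF M(2)])
    finally show ?thesis using True by (simp add: Dk_Suc P_Suc)
  next
    case False
    have "(\<Sum>N\<le>M. real N * Cn (Suc s) i N) = (\<Sum>N\<le>M. real N * R (\<lambda>j. Cn s j N) i)"
      using False by (intro sum.cong, auto)
    also have "\<dots> = R (\<lambda>j. \<Sum>N\<le>M. real N * Cn s j N) i"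
      by (subst Rop_sum_scale, auto)
    also have "(\<lambda>j. \<Sum>N\<le>M. real N * Cn s j N) = Dk s"
      using IH[of M] Suc.prems by simp
    finally show ?thesis using False by (simp add: Dk_Suc)
  qed
qed

lemma pow_tangent:
  fixes y :: real
  assumes "0 \<le> y" "y \<le> 1" "A > 0"
  shows "y ^ N \<ge> y ^ A * (1 - real N / real A)"
proof (cases "N \<le> A")
  case True
  have "y ^ A \<le> y ^ N" using assms True by (intro power_decreasing, auto)
  moreover have "y ^ A * (1 - real N / real A) \<le> y ^ A" using assms by (simp add: mult_left_le)
  ultimately show ?thesis by linarith
next
  case False
  then have "1 - real N / real A \<le> 0" using assms by (simp add: field_simps)
  then have "y ^ A * (1 - real N / real A) \<le> 0" using assms by (simp add: mult_nonneg_nonpos)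
  then show ?thesis using assms by (meson order_trans zero_le_power)
qed

lemma geom_le: "(\<Sum>k<s. r ^ k) \<le> G"
proof -
  have "(\<Sum>k<s. r ^ k) = (1 - r ^ s) / (1 - r)" using r1 by (simp add: sum_gp_strict)
  also have "\<dots> \<le> 1 / (1 - r)" using r0 r1 by (intro divide_right_mono, auto)
  finally show ?thesis by (simp add: G_def)
qed

lemma Dk_bound:
  assumes i: "i < n"
  shows "Dk s i \<le> real s / real n ^ 2 + 2 * G / real n + real s * r ^ s"
proof -
  have h1: "(\<Sum>k<s. r ^ (s - k)) \<le> (\<Sum>k<s. r ^ k)"
  proof -
    have "(\<Sum>k<s. r ^ (s - k)) \<le> (\<Sum>k<s. r ^ (s - Suc k))"
      using r0 r1 by (intro sum_mono power_decreasing, auto)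
    also have "(\<Sum>k<s. r ^ (s - Suc k)) = (\<Sum>k<s. r ^ k)" by (rule sum.nat_diff_reindex)
    finally show ?thesis .
  qed
  have "Dk s i \<le> (\<Sum>k<s. (1 / real n + r ^ k) * (1 / real n + r ^ (s - k)))"
    unfolding Dk_def
    by (intro sum_mono mult_mono P_upper P_nonneg, insert i v r0, auto)
  also have "\<dots> = (\<Sum>k<s. 1 / real n ^ 2) + (\<Sum>k<s. r ^ k) / real n + (\<Sum>k<s. r ^ (s - k)) / real n + (\<Sum>k<s. r ^ k * r ^ (s - k))"
    by (simp add: sum.distrib sum_divide_distrib algebra_simps power2_eq_square)
  also have "(\<Sum>k<s. r ^ k * r ^ (s - k)) = real s * r ^ s"
    by (simp add: power_add[symmetric])
  also have "(\<Sum>k<s. 1 / real n ^ 2) = real s / real n ^ 2" by simp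
  finally have d: "Dk s i \<le> real s / real n ^ 2 + (\<Sum>k<s. r ^ k) / real n + (\<Sum>k<s. r ^ (s - k)) / real n + real s * r ^ s" .
  have "(\<Sum>k<s. r ^ k) / real n \<le> G / real n" using geom_le[of s] n2 by (intro divide_right_mono) auto
  moreover have "(\<Sum>k<s. r ^ (s - k)) / real n \<le> G / real n" using h1 geom_le[of s] n2 by (intro divide_right_mono) auto
  ultimately show ?thesis using d by simp
qed

lemma Qn_dv_lower:
  assumes i: "i < n" and rn: "2 * real n ^ 2 * r ^ n \<le> 1" and A: "real A \<ge> 8 * (1 + G)"
  shows "(Q ^^ n) dv i \<ge> (3/4) ^ A / (4 * real n)"
proof -
  have A0: "A > 0" using A G_pos by (cases A, auto)
  have nr: "real n > 0" using n2 by simp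
  have "(\<Sum>N\<le>n. Cn n i N * ((3/4) ^ A * (1 - real N / real A))) \<le> (\<Sum>N\<le>n. Cn n i N * (3/4) ^ N)"
    by (intro sum_mono mult_left_mono pow_tangent Cnt_nonneg, insert A0, auto)
  also have "\<dots> = (Q ^^ n) dv i" by (rule C1, simp)
  finally have m1: "(\<Sum>N\<le>n. Cn n i N * ((3/4) ^ A * (1 - real N / real A))) \<le> (Q ^^ n) dv i" .
  have "(\<Sum>N\<le>n. Cn n i N * ((3/4) ^ A * (1 - real N / real A)))
      = (3/4) ^ A * ((\<Sum>N\<le>n. Cn n i N) - (\<Sum>N\<le>n. real N * Cn n i N) / real A)"
    by (simp add: sum_distrib_left sum_distrib_right sum_subtractf sum_divide_distrib algebra_simps)
  also have "\<dots> = (3/4) ^ A * (P n i v - Dk n i / real A)" using C2[of n n i] C3[of n n i] by simp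
  finally have m2: "(3/4) ^ A * (P n i v - Dk n i / real A) \<le> (Q ^^ n) dv i" using m1 by simp
  have rn1: "real n * r ^ n \<le> 1 / (2 * real n)" using rn nr by (simp add: field_simps power2_eq_square)
  have rn2: "r ^ n \<le> 1 / (2 * real n)"
  proof -
    have "r ^ n \<le> real n * r ^ n" using n2 r0 by (simp add: mult_le_cancel_right1)
    then show ?thesis using rn1 by simp
  qed
  have p: "P n i v \<ge> 1 / (2 * real n)" using P_lower[OF i v, of n] rn2 nr by (simp add: field_simps)
  have d: "Dk n i \<le> (2 + 2 * G) / real n"
  proof -
    have "Dk n i \<le> real n / real n ^ 2 + 2 * G / real n + real n * r ^ n" by (rule Dk_bound[OF i])
    also have "real n / real n ^ 2 = 1 / real n" using nr by (simp add: power2_eq_square)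
    finally have "Dk n i \<le> 1 / real n + 2 * G / real n + 1 / (2 * real n)" using rn1 by simp
    also have "\<dots> \<le> (2 + 2 * G) / real n" using nr by (simp add: field_simps)
    finally show ?thesis .
  qed
  have dA: "Dk n i / real A \<le> 1 / (4 * real n)"
  proof -
    have "Dk n i / real A \<le> ((2 + 2 * G) / real n) / real A" using d A0 by (intro divide_right_mono) auto
    also have "\<dots> \<le> ((2 + 2 * G) / real n) / (8 * (1 + G))"
      using A G_pos nr by (intro divide_left_mono, auto)
    also have "\<dots> = 1 / (4 * real n)" proof - have "real n * (8 * (1 + G)) > 0" using G_pos nr by simp then show ?thesis using G_pos nr by (simp add: field_simps) qed
    finally show ?thesis .
  qed
  have "1 / (4 * real n) \<le> P n i v - Dk n i / real A" using p dA by (simp add: field_simps)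
  then have "(3/4) ^ A * (1 / (4 * real n)) \<le> (3/4) ^ A * (P n i v - Dk n i / real A)"
    by (intro mult_left_mono, auto)
  with m2 show ?thesis by simp
qed

lemma num_lower:
  assumes m: "n \<le> m" and rn: "2 * real n ^ 2 * r ^ n \<le> 1" and A: "real A \<ge> 8 * (1 + G)"
  shows "(Q ^^ m) dv v \<ge> (3/4) ^ A / (4 * real n) * (Q ^^ m) (\<lambda>_. 1) v"
proof -
  define c where "c = (3/4) ^ A / (4 * real n)"
  have mm: "m = (m - n) + n" using m by simp
  have "(Q ^^ m) (\<lambda>_. 1) v = (Q ^^ (m - n)) ((Q ^^ n) (\<lambda>_. 1)) v"
    by (subst mm, simp only: funpow_add comp_def)
  also have "\<dots> \<le> (Q ^^ (m - n)) (\<lambda>_. 1) v"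
    by (rule HopY_pow_mono, insert Q_pow_le1 v, auto)
  finally have s1: "(Q ^^ m) (\<lambda>_. 1) v \<le> (Q ^^ (m - n)) (\<lambda>_. 1) v" .
  have "c * (Q ^^ (m - n)) (\<lambda>_. 1) v = (Q ^^ (m - n)) (\<lambda>_. c * 1) v" by (rule HopY_pow_scale[symmetric])
  also have "\<dots> \<le> (Q ^^ (m - n)) ((Q ^^ n) dv) v"
    by (rule HopY_pow_mono, insert Qn_dv_lower[OF _ rn A] v, auto simp: c_def)
  also have "\<dots> = (Q ^^ m) dv v" by (subst (2) mm, simp only: funpow_add comp_def)
  finally have s2: "c * (Q ^^ (m - n)) (\<lambda>_. 1) v \<le> (Q ^^ m) dv v" .
  have "c \<ge> 0" unfolding c_def by simp
  then have "c * (Q ^^ m) (\<lambda>_. 1) v \<le> c * (Q ^^ (m - n)) (\<lambda>_. 1) v" using s1 by (intro mult_left_mono)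
  with s2 show ?thesis unfolding c_def by simp
qed

end


lemma sum_list_min1: "sum_list (map (min (1::nat)) xs) \<le> sum_list xs"
  by (induction xs, auto)

lemma lin_indpt_two:
  fixes x :: "complex vec"
  assumes x: "x \<in> carrier_vec n" "x \<noteq> 0\<^sub>v n" "(\<Sum>i<n. vec_index x i) = 0" and n: "n > 0"
  defines "onev \<equiv> vec n (\<lambda>_. 1 :: complex)"
  shows "\<not> module.lin_dep class_ring (module_vec TYPE(complex) n) {onev, x}"
proof
  interpret NC: vec_space "TYPE(complex)" n .
  assume "NC.lin_dep {onev, x}"
  then obtain A a w where A: "finite A" "A \<subseteq> {onev, x}" "a \<in> A \<rightarrow> carrier class_ring"
    "NC.lincomb a A = 0\<^sub>v n" "w \<in> A" "a w \<noteq> 0"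
    unfolding NC.lin_dep_def by auto
  have one_c: "onev \<in> carrier_vec n" unfolding onev_def by simp
  have ne: "onev \<noteq> x"
  proof
    assume "onev = x"
    then have "(\<Sum>i<n. vec_index x i) = of_nat n" unfolding onev_def by auto
    with x(3) n show False by simp
  qed
  define al where "al = (if onev \<in> A then a onev else 0)"
  define be where "be = (if x \<in> A then a x else 0)"
  have comp: "al + be * vec_index x i = 0" if i: "i < n" for i
  proof -
    have "0 = vec_index (NC.lincomb a A) i" using A(4) i by simp
    also have "\<dots> = (\<Sum>y\<in>A. a y * vec_index y i)" by (rule NC.lincomb_index[OF i], insert A(2) one_c x(1), auto)
    also have "\<dots> = al + be * vec_index x i"
    proof -
      have cases: "A = {} \<or> A = {onev} \<or> A = {x} \<or> A = {onev, x}" using A(2) by blast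
      then show ?thesis using ne i unfolding al_def be_def onev_def by auto
    qed
    finally show ?thesis by simp
  qed
  have "(\<Sum>i<n. al + be * vec_index x i) = of_nat n * al + be * (\<Sum>i<n. vec_index x i)"
    by (simp add: sum.distrib sum_distrib_left)
  then have "of_nat n * al = 0" using comp x(3) by simp
  then have al0: "al = 0" using n by simp
  obtain i where i: "i < n" "vec_index x i \<noteq> 0" using x(1,2) by (auto simp: vec_eq_iff)
  have be0: "be = 0" using comp[OF i(1)] al0 i(2) by simp
  have "w = onev \<or> w = x" using A(2,5) by auto
  then show False using A(5,6) al0 be0 unfolding al_def be_def by auto
qed

lemma mult2_contra:
  fixes A :: "complex mat"
  assumes A: "A \<in> carrier_mat n n" and ord: "Polynomial.order 1 (char_poly A) \<le> 1"
  and oneA: "A *\<^sub>v vec n (\<lambda>_. 1) = vec n (\<lambda>_. 1)"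
  and x: "x \<in> carrier_vec n" "x \<noteq> 0\<^sub>v n" "A *\<^sub>v x = x" "(\<Sum>i<n. vec_index x i) = 0"
  and n: "n > 0"
  shows False
proof -
  let ?onev = "vec n (\<lambda>_. 1 :: complex)"
  obtain as where cp: "char_poly A = (\<Prod>a\<leftarrow>as. [:- a, 1:])" using char_poly_factorized[OF A] by auto
  obtain n_as where jnf: "jordan_nf A n_as" using jordan_nf_exists[OF A cp] by auto
  have f: "(\<lambda>(n, e). e = (1::complex)) = (\<lambda>na. snd na = 1)" by (auto simp: fun_eq_iff)
  have "dim_gen_eigenspace A 1 1 \<le> Polynomial.order 1 (char_poly A)"
    unfolding dim_gen_eigenspace[OF jnf] jordan_nf_order[OF jnf] f by (rule sum_list_min1)
  with ord have d1: "dim_gen_eigenspace A 1 1 \<le> 1" by simp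
  define M where "M = char_matrix A 1"
  have M: "M \<in> carrier_mat n n" unfolding M_def using A by simp
  have Meq: "M = A - 1\<^sub>m n" unfolding M_def char_matrix_def using A by (intro eq_matI, auto)
  have "dim_gen_eigenspace A 1 1 = kernel_dim M"
    unfolding dim_gen_eigenspace_def M_def using A by simp
  also have "\<dots> = kernel.dim n M" unfolding kernel_dim_def using M by simp
  finally have dimeq: "kernel.dim n M = dim_gen_eigenspace A 1 1" by simp
  interpret K: kernel n n M by (unfold_locales, rule M)
  have inker: "y \<in> mat_kernel M" if "y \<in> carrier_vec n" "A *\<^sub>v y = y" for y
  proof -
    have "M *\<^sub>v y = A *\<^sub>v y - 1\<^sub>m n *\<^sub>v y" unfolding Meq by (rule minus_mult_distrib_mat_vec, insert A that, auto)
    also have "\<dots> = 0\<^sub>v n" using that by (auto intro!: eq_vecI)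
    finally show ?thesis unfolding mat_kernel[OF M] using that by simp
  qed
  have S: "{?onev, x} \<subseteq> mat_kernel M" using inker oneA x by auto
  have sub: "submodule class_ring (mat_kernel M) (module_vec TYPE(complex) n)"
    unfolding submodule_def
    by (insert K.NC.module_axioms mult_add_distrib_mat_vec[OF M] mult_mat_vec[OF M] mat_kernel[OF M],
        auto simp: class_ring_simps)
  have li: "\<not> K.lin_dep {?onev, x}"
    using K.NC.span_li_not_depend(2)[OF S sub] lin_indpt_two[OF x(1,2,4) n] by simp
  obtain B where B: "finite B" "K.basis B" using kernel_basis_exists[OF M] by auto
  have fd: "K.Ker.fin_dim" unfolding K.Ker.fin_dim_def using B unfolding K.Ker.basis_def by auto
  have ne: "?onev \<noteq> x"
  proof
    assume "?onev = x"
    then have "(\<Sum>i<n. vec_index x i) = of_nat n" by auto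
    with x(4) n show False by simp
  qed
  have "card {?onev, x} \<le> K.dim" by (rule K.Ker.li_le_dim(2)[OF fd S li])
  then have "2 \<le> K.dim" using ne by simp
  with dimeq d1 show False by simp
qed


lemma mat_vec_index: "A \<in> carrier_mat n n \<Longrightarrow> x \<in> carrier_vec n \<Longrightarrow> i < n \<Longrightarrow>
  vec_index (A *\<^sub>v x) i = (\<Sum>j<n. A $$ (i,j) * vec_index x j)"
  by (simp add: scalar_prod_def atLeast0LessThan)

locale Sloc =
  fixes n :: nat and E :: "nat \<Rightarrow> nat \<Rightarrow> bool" and \<rho> r :: real
  assumes reg: "three_regular n E" and n2: "2 \<le> n" and rho: "\<rho> \<le> r" and r0: "0 < r" and r1: "r < 1"
  and eig: "nontrivial_eigs_bounded (trans_mat3 n E) \<rho>"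
begin

definition "p i j = (if E i j then 1/3 else 0 :: real)"
definition "cc i j = (p i j - 1 / real n) / r"
definition "Cm = mat n n (\<lambda>(i,j). complex_of_real (cc i j))"
abbreviation "A \<equiv> trans_mat3 n E"

lemma sym: "i < n \<Longrightarrow> j < n \<Longrightarrow> E i j = E j i" using reg unfolding three_regular_def by auto

lemma p_rowsum: "i < n \<Longrightarrow> (\<Sum>j<n. p i j) = 1"
proof -
  assume i: "i < n"
  have "(\<Sum>j<n. p i j) = (\<Sum>j\<in>{j \<in> {..<n}. E i j}. 1/3)"
    unfolding p_def sum.inter_filter[OF finite_lessThan] by simp
  also have "{j \<in> {..<n}. E i j} = {j. j < n \<and> E i j}" by auto
  finally show ?thesis using reg i unfolding three_regular_def by simp
qed

lemma p_sym: "i < n \<Longrightarrow> j < n \<Longrightarrow> p i j = p j i" using sym unfolding p_def by auto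
lemma cc_sym: "i < n \<Longrightarrow> j < n \<Longrightarrow> cc i j = cc j i" using p_sym unfolding cc_def by auto

lemma p_colsum: "j < n \<Longrightarrow> (\<Sum>i<n. p i j) = 1"
proof -
  assume j: "j < n"
  have "(\<Sum>i<n. p i j) = (\<Sum>i<n. p j i)" by (rule sum.cong, auto simp: p_sym j)
  then show ?thesis using p_rowsum[OF j] by simp
qed

lemma cc_colsum: "j < n \<Longrightarrow> (\<Sum>i<n. cc i j) = 0"
  unfolding cc_def using p_colsum n2 by (simp add: sum_divide_distrib[symmetric] sum_subtractf)

lemma A_carrier: "A \<in> carrier_mat n n" unfolding trans_mat3_def by simp
lemma A_index: "i < n \<Longrightarrow> j < n \<Longrightarrow> A $$ (i,j) = complex_of_real (p i j)"
  unfolding trans_mat3_def p_def by simp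
lemma Cm_carrier: "Cm \<in> carrier_mat n n" unfolding Cm_def by simp

lemma A_one: "A *\<^sub>v vec n (\<lambda>_. 1) = vec n (\<lambda>_. 1)"
proof (rule eq_vecI)
  fix i assume "i < dim_vec (vec n (\<lambda>_. 1 :: complex))"
  then have i: "i < n" by simp
  have "vec_index (A *\<^sub>v vec n (\<lambda>_. 1)) i = (\<Sum>j<n. complex_of_real (p i j))"
    by (subst mat_vec_index[OF A_carrier _ i], simp, rule sum.cong, auto simp: A_index i)
  also have "\<dots> = complex_of_real (\<Sum>j<n. p i j)" by simp
  finally show "vec_index (A *\<^sub>v vec n (\<lambda>_. 1)) i = vec_index (vec n (\<lambda>_. 1)) i" using p_rowsum[OF i] i by simp
qed (insert A_carrier, auto)

lemma p_cc: "p i j = r * cc i j + 1 / real n" unfolding cc_def using r0 by simp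

lemma eig_C: assumes "eigenvalue Cm la" shows "cmod la \<le> 1"
proof -
  from assms obtain x where x: "x \<in> carrier_vec n" "x \<noteq> 0\<^sub>v n" "Cm *\<^sub>v x = la \<cdot>\<^sub>v x"
    unfolding eigenvalue_def eigenvector_def Cm_def by auto
  have Cx: "vec_index (Cm *\<^sub>v x) i = (\<Sum>j<n. complex_of_real (cc i j) * vec_index x j)" if "i < n" for i
  proof -
    have "vec_index (Cm *\<^sub>v x) i = (\<Sum>j<n. Cm $$ (i,j) * vec_index x j)" by (rule mat_vec_index[OF Cm_carrier x(1) that])
    also have "\<dots> = (\<Sum>j<n. complex_of_real (cc i j) * vec_index x j)"
      by (rule sum.cong, simp, simp add: Cm_def that)
    finally show ?thesis .
  qed
  have "(\<Sum>i<n. vec_index (Cm *\<^sub>v x) i) = (\<Sum>i<n. \<Sum>j<n. complex_of_real (cc i j) * vec_index x j)"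
    by (rule sum.cong, simp, rule Cx, simp)
  also have "\<dots> = (\<Sum>j<n. \<Sum>i<n. complex_of_real (cc i j) * vec_index x j)" by (rule sum.swap)
  also have "\<dots> = (\<Sum>j<n. complex_of_real (\<Sum>i<n. cc i j) * vec_index x j)"
    by (simp only: sum_distrib_right[symmetric] of_real_sum)
  also have "\<dots> = 0" using cc_colsum by simp
  finally have s0: "(\<Sum>i<n. vec_index (Cm *\<^sub>v x) i) = 0" .
  have "(\<Sum>i<n. vec_index (Cm *\<^sub>v x) i) = (\<Sum>i<n. la * vec_index x i)"
    by (rule sum.cong, simp, simp only: x(3), insert x(1), simp)
  also have "\<dots> = la * (\<Sum>i<n. vec_index x i)" by (rule sum_distrib_left[symmetric])
  finally have "la * (\<Sum>i<n. vec_index x i) = 0" using s0 by simp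
  then have "la = 0 \<or> (\<Sum>i<n. vec_index x i) = 0" by simp
  then show ?thesis
  proof
    assume "la = 0" then show ?thesis by simp
  next
    assume sx: "(\<Sum>i<n. vec_index x i) = 0"
    have Ax: "A *\<^sub>v x = (complex_of_real r * la) \<cdot>\<^sub>v x"
    proof (rule eq_vecI)
      fix i assume "i < dim_vec ((complex_of_real r * la) \<cdot>\<^sub>v x)"
      then have i: "i < n" using x(1) by simp
      have "vec_index (A *\<^sub>v x) i = (\<Sum>j<n. A $$ (i,j) * vec_index x j)" by (rule mat_vec_index[OF A_carrier x(1) i])
      also have "\<dots> = (\<Sum>j<n. complex_of_real r * (complex_of_real (cc i j) * vec_index x j) + complex_of_real (1 / real n) * vec_index x j)"
      proof (rule sum.cong, simp)
        fix j assume "j \<in> {..<n}"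
        then have j: "j < n" by simp
        have "A $$ (i,j) = complex_of_real r * complex_of_real (cc i j) + complex_of_real (1 / real n)"
          by (simp only: A_index[OF i j] p_cc of_real_add of_real_mult)
        then show "A $$ (i,j) * vec_index x j = complex_of_real r * (complex_of_real (cc i j) * vec_index x j) + complex_of_real (1 / real n) * vec_index x j"
          by (simp add: distrib_right mult.assoc)
      qed
      also have "\<dots> = complex_of_real r * (\<Sum>j<n. complex_of_real (cc i j) * vec_index x j) + complex_of_real (1 / real n) * (\<Sum>j<n. vec_index x j)"
        by (simp only: sum.distrib sum_distrib_left)
      also have "\<dots> = complex_of_real r * (la * vec_index x i)"
        using Cx[OF i] x(1,3) i sx by simp
      also have "\<dots> = vec_index ((complex_of_real r * la) \<cdot>\<^sub>v x) i"
        using x(1) i by simp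
      finally show "vec_index (A *\<^sub>v x) i = vec_index ((complex_of_real r * la) \<cdot>\<^sub>v x) i" .
    qed (use x(1) A_carrier in auto)
    show ?thesis
    proof (cases "complex_of_real r * la = 1")
      case True
      have "A *\<^sub>v x = x" using Ax True x(1) by simp
      moreover have "Polynomial.order 1 (char_poly A) \<le> 1" using eig unfolding nontrivial_eigs_bounded_def by simp
      ultimately show ?thesis using mult2_contra[OF A_carrier _ A_one x(1,2) _ sx] n2 by auto
    next
      case False
      have "eigenvalue A (complex_of_real r * la)"
        unfolding eigenvalue_def eigenvector_def using x(1,2) Ax A_carrier by auto
      then have "cmod (complex_of_real r * la) \<le> \<rho>" using eig False unfolding nontrivial_eigs_bounded_def by auto
      moreover have "cmod (complex_of_real r * la) = r * cmod la" using r0 by (simp add: norm_mult)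
      ultimately have "r * cmod la \<le> r * 1" using rho by linarith
      then show ?thesis using mult_le_cancel_left_pos[OF r0] by blast
    qed
  qed
qed

lemma sr_C: "spectral_radius Cm \<le> 1"
proof -
  have "spectral_radius Cm \<in> norm ` spectrum Cm" by (rule spectral_radius_mem_max(1)[OF Cm_carrier], insert n2, simp)
  then obtain la where "eigenvalue Cm la" "spectral_radius Cm = cmod la" unfolding spectrum_def by auto
  then show ?thesis using eig_C by simp
qed

lemma C_bound: "\<exists>c1 c2. \<forall>k. norm_bound (Cm ^\<^sub>m k) (c1 + c2 * real k ^ (n - 1))"
  using spectral_radius_jnf_norm_bound_le_1_upper_triangular[OF Cm_carrier sr_C] by simp

end


context Sloc begin

definition "Cop f i = (\<Sum>j<n. cc i j * f j)"
definition "Ck k i j = (Cop ^^ k) (\<lambda>l. if l = j then 1 else 0) i"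
definition nsq :: "(nat \<Rightarrow> real) \<Rightarrow> real" where "nsq f = (\<Sum>i<n. (f i)^2)"
definition ip :: "(nat \<Rightarrow> real) \<Rightarrow> (nat \<Rightarrow> real) \<Rightarrow> real" where "ip f g = (\<Sum>i<n. f i * g i)"

lemma Cop_rep: "i < n \<Longrightarrow> (Cop ^^ k) f i = (\<Sum>l<n. Ck k i l * f l)"
proof (induction k arbitrary: i)
  case 0
  have "(\<Sum>l<n. Ck 0 i l * f l) = (\<Sum>l<n. if l = i then f l else 0)" by (rule sum.cong, auto simp: Ck_def)
  also have "\<dots> = f i" using 0 by (simp add: sum.delta)
  finally show ?case by simp
next
  case (Suc k)
  have "(Cop ^^ Suc k) f i = (\<Sum>j<n. cc i j * (Cop ^^ k) f j)" by (simp add: Cop_def)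
  also have "\<dots> = (\<Sum>j<n. cc i j * (\<Sum>l<n. Ck k j l * f l))" by (rule sum.cong, auto simp: Suc.IH)
  also have "\<dots> = (\<Sum>j<n. \<Sum>l<n. cc i j * Ck k j l * f l)"
    by (simp add: sum_distrib_left mult.assoc)
  also have "\<dots> = (\<Sum>l<n. \<Sum>j<n. cc i j * Ck k j l * f l)" by (rule sum.swap)
  also have "\<dots> = (\<Sum>l<n. (\<Sum>j<n. cc i j * Ck k j l) * f l)"
    by (simp add: sum_distrib_right)
  also have "\<dots> = (\<Sum>l<n. Ck (Suc k) i l * f l)"
    by (simp add: Ck_def Cop_def)
  finally show ?case .
qed

lemma Cop_delta: "l < n \<Longrightarrow> j < n \<Longrightarrow> Cop (\<lambda>m. if m = j then 1 else 0) l = cc l j"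
proof -
  assume j: "j < n"
  have "(\<Sum>m<n. cc l m * (if m = j then 1 else 0)) = (\<Sum>m<n. if m = j then cc l m else 0)" by (rule sum.cong, auto)
  also have "\<dots> = cc l j" using j by (simp add: sum.delta)
  finally show ?thesis unfolding Cop_def .
qed

lemma Cm_index: "l < n \<Longrightarrow> j < n \<Longrightarrow> Cm $$ (l,j) = complex_of_real (cc l j)" by (simp add: Cm_def)

lemma Cm_pow: "i < n \<Longrightarrow> j < n \<Longrightarrow> (Cm ^\<^sub>m k) $$ (i,j) = complex_of_real (Ck k i j)"
proof (induction k arbitrary: i j)
  case 0 then show ?case using Cm_carrier by (simp add: Ck_def)
next
  case (Suc k)
  have ck: "Cm ^\<^sub>m k \<in> carrier_mat n n" using Cm_carrier by simp
  have "(Cm ^\<^sub>m Suc k) $$ (i,j) = ((Cm ^\<^sub>m k) * Cm) $$ (i,j)" by simp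
  also have "\<dots> = Matrix.row (Cm ^\<^sub>m k) i \<bullet> Matrix.col Cm j"
    by (rule index_mult_mat(1), insert ck Cm_carrier Suc.prems, auto)
  also have "\<dots> = (\<Sum>l<n. (Cm ^\<^sub>m k) $$ (i,l) * Cm $$ (l,j))"
    unfolding scalar_prod_def using ck Cm_carrier Suc.prems by (simp add: atLeast0LessThan)
  also have "\<dots> = (\<Sum>l<n. complex_of_real (Ck k i l * cc l j))"
    by (rule sum.cong, auto simp: Suc.IH Suc.prems Cm_index)
  also have "\<dots> = complex_of_real (\<Sum>l<n. Ck k i l * cc l j)" by simp
  also have "(\<Sum>l<n. Ck k i l * cc l j) = (Cop ^^ k) (Cop (\<lambda>m. if m = j then 1 else 0)) i"
    by (subst Cop_rep[OF Suc.prems(1)], rule sum.cong, auto simp: Cop_delta Suc.prems)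
  also have "\<dots> = Ck (Suc k) i j" by (simp add: Ck_def funpow_Suc_right del: funpow.simps)
  finally show ?case .
qed

lemma Ck_bound: "\<exists>c1 c2. \<forall>k i j. i < n \<longrightarrow> j < n \<longrightarrow> \<bar>Ck k i j\<bar> \<le> c1 + c2 * real k ^ (n - 1)"
proof -
  obtain c1 c2 where cb: "\<And>k. norm_bound (Cm ^\<^sub>m k) (c1 + c2 * real k ^ (n - 1))" using C_bound by auto
  have "\<bar>Ck k i j\<bar> \<le> c1 + c2 * real k ^ (n - 1)" if "i < n" "j < n" for k i j
  proof -
    have "norm ((Cm ^\<^sub>m k) $$ (i,j)) \<le> c1 + c2 * real k ^ (n - 1)"
      using cb[of k] that Cm_carrier unfolding norm_bound_def by simp
    then show ?thesis using Cm_pow[OF that] by simp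
  qed
  then show ?thesis by blast
qed

lemma nsq_nonneg: "0 \<le> nsq f" unfolding nsq_def by (rule sum_nonneg, simp)

lemma CS: "(ip f g)^2 \<le> nsq f * nsq g" unfolding ip_def nsq_def by (rule Cauchy_Schwarz_ineq_sum)

lemma nsq_ip: "nsq f = ip f f" unfolding nsq_def ip_def by (simp add: power2_eq_square)

lemma ip_sym: "ip (Cop f) g = ip f (Cop g)"
proof -
  have "ip (Cop f) g = (\<Sum>i<n. \<Sum>j<n. cc i j * f j * g i)" unfolding ip_def Cop_def by (simp add: sum_distrib_right)
  also have "\<dots> = (\<Sum>j<n. \<Sum>i<n. cc i j * f j * g i)" by (rule sum.swap)
  also have "\<dots> = (\<Sum>j<n. f j * (\<Sum>i<n. cc j i * g i))"
    by (rule sum.cong, simp, simp add: sum_distrib_left, rule sum.cong, auto simp: cc_sym)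
  finally show ?thesis unfolding ip_def Cop_def .
qed

lemma nsq_pow_bound:
  assumes bd: "\<And>i l. i < n \<Longrightarrow> l < n \<Longrightarrow> \<bar>Ck k i l\<bar> \<le> B"
  shows "nsq ((Cop ^^ k) f) \<le> real n * (B^2 * (real n * nsq f))"
proof -
  have S: "(\<Sum>l<n. \<bar>f l\<bar>)^2 \<le> real n * nsq f"
    using Cauchy_Schwarz_ineq_sum[of "\<lambda>_. 1" "\<lambda>l. \<bar>f l\<bar>" "{..<n}"] unfolding nsq_def by simp
  have "((Cop ^^ k) f i)^2 \<le> B^2 * (real n * nsq f)" if i: "i < n" for i
  proof -
    have "\<bar>(Cop ^^ k) f i\<bar> \<le> (\<Sum>l<n. \<bar>Ck k i l\<bar> * \<bar>f l\<bar>)"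
      unfolding Cop_rep[OF i] by (rule order_trans[OF sum_abs], simp add: abs_mult)
    also have "\<dots> \<le> (\<Sum>l<n. B * \<bar>f l\<bar>)" by (rule sum_mono, rule mult_right_mono, auto intro: bd i)
    finally have a: "\<bar>(Cop ^^ k) f i\<bar> \<le> B * (\<Sum>l<n. \<bar>f l\<bar>)" by (simp add: sum_distrib_left)
    have "((Cop ^^ k) f i)^2 \<le> (B * (\<Sum>l<n. \<bar>f l\<bar>))^2"
      using power_mono[OF a abs_ge_zero, of 2] by simp
    also have "\<dots> = B^2 * (\<Sum>l<n. \<bar>f l\<bar>)^2" by (simp add: power_mult_distrib)
    also have "\<dots> \<le> B^2 * (real n * nsq f)" by (rule mult_left_mono[OF S], simp)
    finally show ?thesis .
  qed
  then have "nsq ((Cop ^^ k) f) \<le> (\<Sum>i<n. B^2 * (real n * nsq f))" unfolding nsq_def by (intro sum_mono, auto)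
  then show ?thesis by simp
qed

end


lemma lim_aux0: "s > (1::real) \<Longrightarrow> ((\<lambda>k::nat. (c1 + c2 * real k ^ d) / s ^ k) \<longlongrightarrow> 0) sequentially"
  by real_asymp

lemma lim_aux: assumes q: "q > (1::real)" shows "((\<lambda>k::nat. N * (c1 + c2 * real k ^ d)^2 / q ^ k) \<longlongrightarrow> 0) sequentially"
proof -
  have s: "sqrt q > 1" using q by simp
  have "((\<lambda>k::nat. N * ((c1 + c2 * real k ^ d) / sqrt q ^ k)^2) \<longlongrightarrow> N * 0^2) sequentially"
    by (intro tendsto_intros lim_aux0[OF s])
  moreover have "(\<lambda>k::nat. N * ((c1 + c2 * real k ^ d) / sqrt q ^ k)^2) = (\<lambda>k::nat. N * (c1 + c2 * real k ^ d)^2 / q ^ k)"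
  proof
    fix k :: nat
    have "(sqrt q ^ k)^2 = (sqrt q * sqrt q) ^ k" by (simp only: power2_eq_square power_mult_distrib)
    also have "sqrt q * sqrt q = q" using q by simp
    finally have "(sqrt q ^ k)^2 = q ^ k" .
    then show "N * ((c1 + c2 * real k ^ d) / sqrt q ^ k)^2 = N * (c1 + c2 * real k ^ d)^2 / q ^ k"
      by (simp add: power_divide)
  qed
  ultimately show ?thesis by simp
qed

context Sloc begin

lemma nsq_cong: "(\<And>i. i < n \<Longrightarrow> f i = g i) \<Longrightarrow> nsq f = nsq g" unfolding nsq_def by (rule sum.cong, auto)

lemma b_sq: "(nsq ((Cop ^^ Suc k) f))^2 \<le> nsq ((Cop ^^ Suc (Suc k)) f) * nsq ((Cop ^^ k) f)"
proof -
  define g where "g = (Cop ^^ k) f"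
  have "nsq (Cop g) = ip g (Cop (Cop g))" unfolding nsq_ip ip_sym ..
  then have "(nsq (Cop g))^2 \<le> nsq g * nsq (Cop (Cop g))" using CS by simp
  then show ?thesis unfolding g_def by (simp add: mult.commute)
qed

lemma b_zero: assumes "nsq g = 0" shows "nsq (Cop g) = 0"
proof -
  have "\<forall>i\<in>{..<n}. (g i)^2 = 0" using assms unfolding nsq_def by (subst sum_nonneg_eq_0_iff[symmetric], auto)
  then have g0: "g i = 0" if "i < n" for i using that by auto
  have "Cop g i = 0" for i unfolding Cop_def by (rule sum.neutral, auto simp: g0)
  then show ?thesis unfolding nsq_def by simp
qed

lemma b_ratio: "nsq ((Cop ^^ 1) f) * nsq ((Cop ^^ k) f) \<le> nsq ((Cop ^^ Suc k) f) * nsq ((Cop ^^ 0) f)"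
proof (induction k)
  case 0 then show ?case by (simp add: mult.commute)
next
  case (Suc k)
  define b where "b j = nsq ((Cop ^^ j) f)" for j
  have bnn: "0 \<le> b j" for j unfolding b_def by (rule nsq_nonneg)
  have IH: "b 1 * b k \<le> b (Suc k) * b 0" using Suc.IH unfolding b_def .
  have sq: "(b (Suc k))^2 \<le> b (Suc (Suc k)) * b k" unfolding b_def by (rule b_sq)
  have bz: "b k = 0 \<Longrightarrow> b (Suc k) = 0" unfolding b_def by (simp add: b_zero)
  have "b 1 * b (Suc k) \<le> b (Suc (Suc k)) * b 0"
  proof (cases "b (Suc k) = 0 \<or> b k = 0")
    case True
    then have "b (Suc k) = 0" using bz by auto
    then show ?thesis using bnn by simp
  next
    case False
    then have pk: "b k > 0" and pk1: "b (Suc k) > 0" using bnn by (auto simp: less_le)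
    have "(b 1 * b (Suc k)) * b k = (b 1 * b k) * b (Suc k)" by (simp add: algebra_simps)
    also have "\<dots> \<le> (b (Suc k) * b 0) * b (Suc k)" by (rule mult_right_mono[OF IH bnn])
    also have "\<dots> = (b (Suc k))^2 * b 0" by (simp add: power2_eq_square algebra_simps)
    also have "\<dots> \<le> (b (Suc (Suc k)) * b k) * b 0" by (rule mult_right_mono[OF sq bnn])
    also have "\<dots> = (b (Suc (Suc k)) * b 0) * b k" by (simp add: algebra_simps)
    finally show ?thesis using pk by (simp add: mult_le_cancel_right_pos)
  qed
  then show ?case unfolding b_def .
qed

lemma b_geo: assumes b0: "nsq f > 0"
  shows "nsq f * (nsq (Cop f) / nsq f) ^ k \<le> nsq ((Cop ^^ k) f)"
proof (induction k)
  case 0 then show ?case by simp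
next
  case (Suc k)
  have q: "0 \<le> nsq (Cop f) / nsq f" using nsq_nonneg b0 by simp
  have "nsq f * (nsq (Cop f) / nsq f) ^ Suc k = (nsq f * (nsq (Cop f) / nsq f) ^ k) * (nsq (Cop f) / nsq f)"
    by simp
  also have "\<dots> \<le> nsq ((Cop ^^ k) f) * (nsq (Cop f) / nsq f)" by (rule mult_right_mono[OF Suc.IH q])
  also have "\<dots> = (nsq ((Cop ^^ 1) f) * nsq ((Cop ^^ k) f)) / nsq ((Cop ^^ 0) f)" by simp
  also have "\<dots> \<le> (nsq ((Cop ^^ Suc k) f) * nsq ((Cop ^^ 0) f)) / nsq ((Cop ^^ 0) f)"
    by (rule divide_right_mono[OF b_ratio], insert b0, simp)
  also have "\<dots> = nsq ((Cop ^^ Suc k) f)" using b0 by simp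
  finally show ?case .
qed

lemma contraction: "nsq (Cop f) \<le> nsq f"
proof (rule ccontr)
  assume "\<not> nsq (Cop f) \<le> nsq f"
  then have gt: "nsq (Cop f) > nsq f" by simp
  have b0: "nsq f > 0"
  proof (rule ccontr)
    assume "\<not> nsq f > 0"
    then have "nsq f = 0" using nsq_nonneg[of f] by simp
    then have "nsq (Cop f) = 0" by (rule b_zero)
    with gt nsq_nonneg[of f] show False by simp
  qed
  define q where "q = nsq (Cop f) / nsq f"
  have q1: "q > 1" unfolding q_def using gt b0 by simp
  obtain c1 c2 where cb: "\<And>k i j. i < n \<Longrightarrow> j < n \<Longrightarrow> \<bar>Ck k i j\<bar> \<le> c1 + c2 * real k ^ (n - 1)"
    using Ck_bound by blast
  have le: "q ^ k \<le> real n * (c1 + c2 * real k ^ (n - 1))^2 * real n" for k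
  proof -
    have "nsq f * q ^ k \<le> nsq ((Cop ^^ k) f)" unfolding q_def by (rule b_geo[OF b0])
    also have "\<dots> \<le> real n * ((c1 + c2 * real k ^ (n - 1))^2 * (real n * nsq f))"
      by (rule nsq_pow_bound, rule cb)
    finally have "nsq f * q ^ k \<le> nsq f * (real n * (c1 + c2 * real k ^ (n - 1))^2 * real n)"
      by (simp add: algebra_simps)
    then show ?thesis using b0 by (simp add: mult_le_cancel_left_pos)
  qed
  have lim: "((\<lambda>k::nat. (real n * real n) * (c1 + c2 * real k ^ (n - 1))^2 / q ^ k) \<longlongrightarrow> 0) sequentially"
    by (rule lim_aux[OF q1])
  then have "eventually (\<lambda>k. (real n * real n) * (c1 + c2 * real k ^ (n - 1))^2 / q ^ k < 1) sequentially"
    by (rule order_tendstoD, simp)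
  then obtain k where k: "(real n * real n) * (c1 + c2 * real k ^ (n - 1))^2 / q ^ k < 1"
    by (auto simp: eventually_sequentially)
  have qk: "q ^ k > 0" using q1 by simp
  from k qk have "(real n * real n) * (c1 + c2 * real k ^ (n - 1))^2 < q ^ k" by (simp add: divide_less_eq)
  with le[of k] show False by (simp add: algebra_simps)
qed

lemma Rop_p: "Rop n E f i = (\<Sum>j<n. p i j * f j)"
proof -
  have "(\<Sum>j<n. p i j * f j) = (\<Sum>j<n. if E i j then f j / 3 else 0)" by (rule sum.cong, auto simp: p_def)
  also have "\<dots> = (\<Sum>j\<in>{j \<in> {..<n}. E i j}. f j / 3)" unfolding sum.inter_filter[OF finite_lessThan] ..
  also have "{j \<in> {..<n}. E i j} = {j. j < n \<and> E i j}" by auto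
  finally show ?thesis unfolding Rop_def by (simp add: sum_divide_distrib)
qed

lemma Rop_C: assumes "(\<Sum>j<n. w j) = 0" shows "Rop n E w i = r * Cop w i"
proof -
  have "Rop n E w i = (\<Sum>j<n. r * (cc i j * w j) + (1 / real n) * w j)"
    unfolding Rop_p by (rule sum.cong, simp, simp add: p_cc algebra_simps)
  also have "\<dots> = r * Cop w i + (1 / real n) * (\<Sum>j<n. w j)"
    unfolding Cop_def by (simp add: sum.distrib sum_distrib_left)
  finally show ?thesis using assms by simp
qed

lemma Rop_colsum: "(\<Sum>i<n. Rop n E w i) = (\<Sum>j<n. w j)"
proof -
  have "(\<Sum>i<n. Rop n E w i) = (\<Sum>i<n. \<Sum>j<n. p i j * w j)" unfolding Rop_p ..
  also have "\<dots> = (\<Sum>j<n. \<Sum>i<n. p i j * w j)" by (rule sum.swap)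
  also have "\<dots> = (\<Sum>j<n. (\<Sum>i<n. p i j) * w j)" by (simp add: sum_distrib_right)
  also have "\<dots> = (\<Sum>j<n. w j)" by (rule sum.cong, auto simp: p_colsum)
  finally show ?thesis .
qed

lemma Rop_pow_contr:
  assumes "(\<Sum>j<n. w j) = 0"
  shows "nsq ((Rop n E ^^ k) w) \<le> (r^2)^k * nsq w \<and> (\<Sum>i<n. (Rop n E ^^ k) w i) = 0"
proof (induction k)
  case 0 then show ?case using assms by simp
next
  case (Suc k)
  define g where "g = (Rop n E ^^ k) w"
  have s: "(\<Sum>i<n. g i) = 0" using Suc.IH unfolding g_def by simp
  have "nsq (Rop n E g) = nsq (\<lambda>i. r * Cop g i)" by (rule nsq_cong, rule Rop_C[OF s])
  also have "\<dots> = r^2 * nsq (Cop g)" unfolding nsq_def by (simp add: power_mult_distrib sum_distrib_left)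
  also have "\<dots> \<le> r^2 * nsq g" by (rule mult_left_mono[OF contraction], simp)
  also have "\<dots> \<le> r^2 * ((r^2)^k * nsq w)" using Suc.IH unfolding g_def by (intro mult_left_mono, auto)
  finally have a: "nsq (Rop n E g) \<le> (r^2)^Suc k * nsq w" by simp
  have b: "(\<Sum>i<n. Rop n E g i) = 0" using Rop_colsum s by simp
  show ?case using a b unfolding g_def by simp
qed

lemma Rop_pow_const: "i < n \<Longrightarrow> (Rop n E ^^ k) (\<lambda>_. c) i = c"
proof (induction k arbitrary: i)
  case 0 then show ?case by simp
next
  case (Suc k)
  have "(Rop n E ^^ Suc k) (\<lambda>_. c) i = (\<Sum>j<n. p i j * (Rop n E ^^ k) (\<lambda>_. c) j)" by (simp add: Rop_p)
  also have "\<dots> = (\<Sum>j<n. p i j * c)" by (rule sum.cong, auto simp: Suc.IH)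
  also have "\<dots> = c" using p_rowsum[OF Suc.prems] by (simp add: sum_distrib_right[symmetric])
  finally show ?case .
qed

lemma spec_bound: assumes i: "i < n" and j: "j < n" shows "\<bar>Pk n E k i j - 1 / real n\<bar> \<le> r ^ k"
proof -
  define w where "w l = (if l = j then 1 else 0) - 1 / real n" for l
  have sw: "(\<Sum>l<n. w l) = 0" unfolding w_def using j n2 by (simp add: sum_subtractf)
  have d: "(\<lambda>l. if l = j then 1 else (0::real)) = (\<lambda>l. 1 * w l + 1 * (\<lambda>_. 1 / real n) l)" unfolding w_def by auto
  have "Pk n E k i j = (Rop n E ^^ k) (\<lambda>l. 1 * w l + 1 * (\<lambda>_. 1 / real n) l) i" unfolding Pk_def d ..
  also have "\<dots> = (Rop n E ^^ k) w i + (Rop n E ^^ k) (\<lambda>_. 1 / real n) i"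
    using HopY_pow_lin[where n=n and E=E and v=0 and y=1 and k=k and a=1 and b=1 and f=w and g="\<lambda>_. 1 / real n" and i=i]
    unfolding Rop_eq[of n E 0] by simp
  also have "(Rop n E ^^ k) (\<lambda>_. 1 / real n) i = 1 / real n" by (rule Rop_pow_const[OF i])
  finally have e: "Pk n E k i j - 1 / real n = (Rop n E ^^ k) w i" by simp
  have nw: "nsq w \<le> 1"
  proof -
    have "nsq w = (\<Sum>l<n. (if l = j then 1 else 0) * (1 - 2 / real n) + 1 / (real n)^2)"
      unfolding nsq_def w_def by (rule sum.cong, auto simp: power2_eq_square field_simps)
    also have "\<dots> = (\<Sum>l<n. (if l = j then 1 else 0) * (1 - 2 / real n)) + (\<Sum>l<n. 1 / (real n)^2)" by (rule sum.distrib)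
    finally have e1: "nsq w = (\<Sum>l<n. (if l = j then 1 else 0) * (1 - 2 / real n)) + (\<Sum>l<n. 1 / (real n)^2)" .
    have "(\<Sum>l<n. (if l = j then 1 else 0) * (1 - 2 / real n)) = (\<Sum>l<n. if l = j then (1 - 2 / real n) else 0)"
      by (rule sum.cong, auto)
    also have "\<dots> = 1 - 2 / real n" using j by (simp add: sum.delta)
    finally have e2: "(\<Sum>l<n. (if l = j then 1 else 0) * (1 - 2 / real n)) = 1 - 2 / real n" .
    have e3: "(\<Sum>l<n. 1 / (real n)^2) = 1 / real n" using n2 by (simp add: power2_eq_square)
    have "1 - 2 / real n + 1 / real n \<le> 1" using n2 by simp
    then show ?thesis using e1 e2 e3 by simp
  qed
  have "((Rop n E ^^ k) w i)^2 \<le> nsq ((Rop n E ^^ k) w)"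
    unfolding nsq_def using i by (intro member_le_sum, auto)
  also have "\<dots> \<le> (r^2)^k * nsq w" using Rop_pow_contr[OF sw] by simp
  also have "\<dots> \<le> (r^2)^k * 1" by (rule mult_left_mono[OF nw], simp)
  also have "\<dots> = (r ^ k)^2" by (simp add: power_mult[symmetric] mult.commute)
  finally have "((Rop n E ^^ k) w i)^2 \<le> (r ^ k)^2" .
  then have "\<bar>(Rop n E ^^ k) w i\<bar> \<le> r ^ k" using r0 by (simp add: power2_le_iff_abs_le)
  then show ?thesis using e by simp
qed

end


lemma main_bound:
  fixes \<rho> r :: real
  assumes r0: "0 < r" and r1: "r < 1" and rho: "\<rho> \<le> r"
  and reg: "three_regular n E" and eig: "nontrivial_eigs_bounded (trans_mat3 n E) \<rho>" and v: "v < n"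
  and n2: "2 \<le> n" and rn: "2 * real n ^ 2 * r ^ n \<le> 1" and A: "real A \<ge> 8 * (1 + 1 / (1 - r))"
  and m: "n \<le> m" and m2: "2 \<le> m"
  and uS: "2 / sqrt (real m) \<le> (1 - 1 / real n) ^ m / (1 + 1 / (1 - r)) ^ 2"
  shows "return_time_eq (Gt_adj n E v) (Inl 0) (Suc (Suc m)) / return_time_ge (Gt_adj n E v) (Inl 0) (Suc (Suc m))
     \<ge> (3/4) ^ A / 4 / (8 * real n)"
proof -
  interpret S: Sloc n E \<rho> r by (unfold_locales, insert assms, auto)
  interpret H: Hloc n E v r by (unfold_locales, insert assms S.spec_bound, auto)
  interpret Gt n E v by (unfold_locales, insert assms, auto)
  have G: "H.G = 1 / (1 - r)" unfolding H.G_def ..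
  define u where "u = (Lop ^^ m) (\<lambda>_. 1) 1"
  define Sv where "Sv = (H.Q ^^ m) (\<lambda>_. 1) v"
  define c where "c = (3/4::real) ^ A / 4"
  have c0: "c > 0" unfolding c_def by simp
  have u0: "0 \<le> u" unfolding u_def using Lop_pow_bounds by simp
  have Sl: "Sv \<ge> (1 - 1 / real n) ^ m / (1 + 1 / (1 - r)) ^ 2" unfolding Sv_def using H.S_lower G by simp
  have "u \<le> 2 / sqrt (real m)" unfolding u_def by (rule line_bound[OF m2])
  then have uS': "u \<le> Sv" using uS Sl by linarith
  have Spos: "Sv > 0"
  proof -
    have "1 / (1 - r) > 0" using r1 by simp
    then have p: "0 < 1 + 1 / (1 - r)" by linarith
    have q: "0 < (1 - 1 / real n) ^ m" using n2 by simp
    have "0 < (1 - 1 / real n) ^ m / (1 + 1 / (1 - r)) ^ 2" using p q by simp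
    then show ?thesis using Sl by linarith
  qed
  have ge: "return_time_ge (Gt_adj n E v) (Inl 0) (Suc (Suc m)) = (u + Sv) / 2"
    unfolding ge_formula u_def Sv_def Hop_eq ..
  have "return_time_eq (Gt_adj n E v) (Inl 0) (Suc (Suc m)) \<ge> (Hop n E v ^^ m) (\<lambda>j. if j = v then 1/4 else 0) v / 2"
    by (rule eq_formula)
  also have "(Hop n E v ^^ m) (\<lambda>j. if j = v then 1/4 else 0) v = 1/4 * (H.Q ^^ m) H.dv v"
  proof -
    have f: "(\<lambda>j. if j = v then 1/4 else 0) = (\<lambda>j. 1/4 * H.dv j)" by auto
    show ?thesis unfolding Hop_eq f by (rule HopY_pow_scale)
  qed
  finally have eq1: "return_time_eq (Gt_adj n E v) (Inl 0) (Suc (Suc m)) \<ge> (H.Q ^^ m) H.dv v / 8" by simp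
  have "(H.Q ^^ m) H.dv v \<ge> (3/4) ^ A / (4 * real n) * Sv"
    unfolding Sv_def by (rule H.num_lower[OF m rn], use A G in simp)
  then have eq2: "return_time_eq (Gt_adj n E v) (Inl 0) (Suc (Suc m)) \<ge> c / (8 * real n) * Sv"
    using eq1 unfolding c_def by (simp add: field_simps)
  have gepos: "(u + Sv) / 2 > 0" using u0 Spos by simp
  have "c / (8 * real n) = (c / (8 * real n) * Sv) / Sv" using Spos by simp
  also have "\<dots> \<le> (c / (8 * real n) * Sv) / ((u + Sv) / 2)"
    using Spos uS' c0 n2 u0 by (intro divide_left_mono, auto intro: mult_pos_pos)
  also have "\<dots> \<le> return_time_eq (Gt_adj n E v) (Inl 0) (Suc (Suc m)) / ((u + Sv) / 2)"
    by (rule divide_right_mono[OF eq2], insert gepos, simp)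
  finally show ?thesis unfolding ge c_def by simp
qed

lemma pow_lower:
  fixes t :: nat
  assumes n2: "2 \<le> n" and nt: "8 * real t / ln (real t) \<le> real n" and t4: "4 \<le> t"
  shows "(1 - 1 / real n) ^ t \<ge> real t powr (-1/4)"
proof -
  have lt: "ln (real t) > 0" using t4 by simp
  define x where "x = 1 / real n"
  have x0: "0 \<le> x" "x \<le> 1/2" unfolding x_def using n2 by auto
  have "x * (2 * x) \<le> x * 1" using x0 by (intro mult_left_mono) auto
  then have "2 * x^2 \<le> x" by (simp add: power2_eq_square)
  then have "- 2 * x \<le> - x - 2 * x^2" by linarith
  also have "\<dots> \<le> ln (1 - x)" by (rule ln_one_minus_pos_lower_bound[OF x0])
  finally have l1: "- 2 * x \<le> ln (1 - x)" .
  have tx: "real t * x \<le> ln (real t) / 8"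
  proof -
    have "8 * real t \<le> real n * ln (real t)" using nt lt by (simp add: divide_le_eq)
    then show ?thesis unfolding x_def using n2 by (simp add: field_simps)
  qed
  have "-(1/4) * ln (real t) \<le> real t * (- 2 * x)" using tx by simp
  also have "\<dots> \<le> real t * ln (1 - x)" using l1 by (intro mult_left_mono, auto)
  finally have "exp (-(1/4) * ln (real t)) \<le> exp (real t * ln (1 - x))" by simp
  also have "exp (real t * ln (1 - x)) = (1 - x) ^ t"
    using x0 by (simp add: ln_realpow[symmetric])
  finally show ?thesis unfolding x_def using t4 by (simp add: powr_def)
qed

theorem theorem4p1:
  fixes \<rho> :: real
  assumes "\<rho> < 1"
  shows "\<exists>K c :: real. K > 0 \<and> c > 0 \<and> (\<exists>T::nat. \<forall>t\<ge>T.
     \<forall>(n::nat) (E :: nat \<Rightarrow> nat \<Rightarrow> bool) (v::nat).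
       K * real t / ln (real t) \<le> real n \<and> real n \<le> K * real t / ln (real t) + 2 \<and>
       three_regular n E \<and> nontrivial_eigs_bounded (trans_mat3 n E) \<rho> \<and> v < n \<longrightarrow>
       return_time_eq (Gt_adj n E v) (Inl 0) t / return_time_ge (Gt_adj n E v) (Inl 0) t
         \<ge> c * ln (real t) / real t)"
proof -
  define r where "r = max \<rho> (1/2)"
  have r0: "0 < r" and r1: "r < 1" and rho: "\<rho> \<le> r" using assms unfolding r_def by auto
  define G where "G = 1 / (1 - r)"
  have G0: "G > 0" unfolding G_def using r1 by simp
  define A where "A = nat \<lceil>8 * (1 + G)\<rceil>"
  have A: "real A \<ge> 8 * (1 + G)" unfolding A_def by linarith
  define c1 where "c1 = (3/4::real) ^ A / 4"
  have c1: "c1 > 0" unfolding c1_def by simp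
  define c2 where "c2 = 1 / (1 + G) ^ 2"
  have c2: "c2 > 0" unfolding c2_def using G0 by simp
  have "((\<lambda>k::nat. 2 * real k ^ 2 * r ^ k) \<longlongrightarrow> 0) sequentially" using r0 r1 by real_asymp
  then have "eventually (\<lambda>k. 2 * real k ^ 2 * r ^ k < 1) sequentially" by (rule order_tendstoD, simp)
  then obtain N1 where N1: "\<And>k. k \<ge> N1 \<Longrightarrow> 2 * real k ^ 2 * r ^ k < 1" by (auto simp: eventually_sequentially)
  define N0 where "N0 = real (max N1 2)"
  have ev1: "eventually (\<lambda>t::nat. N0 \<le> 8 * real t / ln (real t)) sequentially"
  proof -
    have "filterlim (\<lambda>t::nat. 8 * real t / ln (real t)) at_top sequentially" by real_asymp
    then show ?thesis by (simp add: filterlim_at_top)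
  qed
  have ev2: "eventually (\<lambda>t::nat. 8 * real t / ln (real t) + 2 \<le> real t - 2) sequentially" by real_asymp
  have ev3: "eventually (\<lambda>t::nat. 2 / sqrt (real t - 2) * real t powr (1/4) < c2) sequentially"
  proof -
    have "((\<lambda>t::nat. 2 / sqrt (real t - 2) * real t powr (1/4)) \<longlongrightarrow> 0) sequentially" by real_asymp
    then show ?thesis by (rule order_tendstoD(2)[OF _ c2])
  qed
  have ev4: "eventually (\<lambda>t::nat. 4 \<le> real t) sequentially" by real_asymp
  obtain T where T: "\<And>t. t \<ge> T \<Longrightarrow> N0 \<le> 8 * real t / ln (real t) \<and> 8 * real t / ln (real t) + 2 \<le> real t - 2
      \<and> 2 / sqrt (real t - 2) * real t powr (1/4) < c2 \<and> 4 \<le> real t"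
    using eventually_conj[OF ev1 eventually_conj[OF ev2 eventually_conj[OF ev3 ev4]]]
    by (auto simp: eventually_sequentially)
  have main: "\<forall>t\<ge>T. \<forall>(n::nat) (E :: nat \<Rightarrow> nat \<Rightarrow> bool) (v::nat).
       8 * real t / ln (real t) \<le> real n \<and> real n \<le> 8 * real t / ln (real t) + 2 \<and>
       three_regular n E \<and> nontrivial_eigs_bounded (trans_mat3 n E) \<rho> \<and> v < n \<longrightarrow>
       return_time_eq (Gt_adj n E v) (Inl 0) t / return_time_ge (Gt_adj n E v) (Inl 0) t
         \<ge> c1 / 128 * ln (real t) / real t"
  proof (intro allI impI)
    fix t n E v
    assume t: "T \<le> t"
    assume h: "8 * real t / ln (real t) \<le> real n \<and> real n \<le> 8 * real t / ln (real t) + 2 \<and>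
       three_regular n E \<and> nontrivial_eigs_bounded (trans_mat3 n E) \<rho> \<and> v < n"
    from T[OF t] have T1: "N0 \<le> 8 * real t / ln (real t)" and T2: "8 * real t / ln (real t) + 2 \<le> real t - 2"
      and T3: "2 / sqrt (real t - 2) * real t powr (1/4) < c2" and T4: "4 \<le> real t" by auto
    have lt: "ln (real t) > 0" using T4 by simp
    have tpos: "real t > 0" using T4 by simp
    have nN0: "N0 \<le> real n" using T1 h by linarith
    have n2: "2 \<le> n" using nN0 unfolding N0_def by simp
    have nN1: "N1 \<le> n" using nN0 unfolding N0_def by simp
    have rn: "2 * real n ^ 2 * r ^ n \<le> 1" using N1[OF nN1] by simp
    have t4n: "4 \<le> t" using T4 by simp
    define m where "m = t - 2"
    have tm: "t = Suc (Suc m)" using t4n unfolding m_def by simp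
    have mt: "real m = real t - 2" using tm by simp
    have m2: "2 \<le> m" using T4 tm by simp
    have nm: "n \<le> m" using h T2 mt by linarith
    have pl: "(1 - 1 / real n) ^ t \<ge> real t powr (-1/4)"
      by (rule pow_lower[OF n2 _ ], insert h T4, auto)
    have "(1 - 1 / real n) ^ t \<le> (1 - 1 / real n) ^ m"
      using tm n2 by (intro power_decreasing, auto)
    with pl have plm: "(1 - 1 / real n) ^ m \<ge> real t powr (-1/4)" by simp
    have uS: "2 / sqrt (real m) \<le> (1 - 1 / real n) ^ m / (1 + 1 / (1 - r)) ^ 2"
    proof -
      have "2 / sqrt (real m) = (2 / sqrt (real t - 2) * real t powr (1/4)) * real t powr (-1/4)"
        using tpos mt by (simp add: powr_minus field_simps)
      also have "\<dots> \<le> c2 * real t powr (-1/4)" using T3 by (intro mult_right_mono, auto)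
      also have "\<dots> \<le> c2 * (1 - 1 / real n) ^ m" using plm c2 by (intro mult_left_mono, auto)
      also have "\<dots> = (1 - 1 / real n) ^ m / (1 + 1 / (1 - r)) ^ 2" unfolding c2_def G_def by simp
      finally show ?thesis .
    qed
    have mb: "return_time_eq (Gt_adj n E v) (Inl 0) t / return_time_ge (Gt_adj n E v) (Inl 0) t
       \<ge> c1 / (8 * real n)"
      unfolding tm c1_def
      by (rule main_bound[OF r0 r1 rho _ _ _ n2 rn _ nm m2 uS], insert h A, auto simp: G_def)
    have "real n \<le> 16 * real t / ln (real t)"
    proof -
      have "2 \<le> 8 * real t / ln (real t)" using T1 unfolding N0_def by simp
      then show ?thesis using h by simp
    qed
    then have "c1 / 128 * ln (real t) / real t \<le> c1 / (8 * real n)"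
      using lt tpos c1 n2 by (simp add: field_simps)
    with mb show "c1 / 128 * ln (real t) / real t \<le> return_time_eq (Gt_adj n E v) (Inl 0) t / return_time_ge (Gt_adj n E v) (Inl 0) t"
      by linarith
  qed
  show ?thesis
    by (rule exI[of _ "8::real"], rule exI[of _ "c1 / 128"], intro conjI, simp, use c1 in simp, rule exI[of _ T], rule main)
qed


end
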